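(* Let $\mathcal{H}$ be a separable infinite-dimensional complex Hilbert space and $\mathcal{K}=\bigoplus_{k=1}^\infty\mathcal{H}$. There exists a sequence of quasinilpotent operators $A_k\in\mathcal{B}(\mathcal{H})$ such that $\bigoplus_{k=1}^\infty A_k$ is a quasinilpotent operator in $\mathcal{B}(\mathcal{K})$ and \[\Lambda\Bigl(\bigoplus_{k=1}^\infty A_k\Bigr)\supsetneq\overline{\bigcup_{k=1}^\infty\Lambda(A_k)},\] where the bar denotes closure in $\mathbb{R}$.
   Context: For quasinilpotent $T$ (i.e. $\sigma(T)=\{0\}$) and $x\neq 0$, $k_x(T)=\limsup_{\lambda\to0}\frac{\ln\|(\lambda-T)^{-1}x\|}{\ln\|(\lambda-T)^{-1}\|}$, and the power set is $\Lambda(T)=\{k_x(T): x\neq0\}$. *)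

theory Defs
  imports "HOL-Analysis.Analysis"
begin

text \<open>Concrete model of complex Hilbert spaces: l2 over an index type 'i.
  H = l2 over nat (the separable infinite-dimensional complex Hilbert space, up to
  unitary equivalence); K = direct sum of countably many copies of H = l2 over nat \<times> nat.
  Operators are functions on ('i \<Rightarrow> complex), only their behaviour on l2 matters.\<close>

definition l2 :: "('i \<Rightarrow> complex) set" where
  "l2 = {f. (\<lambda>i. (cmod (f i))\<^sup>2) summable_on UNIV}"

definition l2norm :: "('i \<Rightarrow> complex) \<Rightarrow> real" where
  "l2norm f = sqrt (\<Sum>\<^sub>\<infinity>i. (cmod (f i))\<^sup>2)"

definition bounded_op :: "(('i \<Rightarrow> complex) \<Rightarrow> ('i \<Rightarrow> complex)) \<Rightarrow> bool" where
  "bounded_op T \<longleftrightarrow>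
     (\<forall>f\<in>l2. T f \<in> l2) \<and>
     (\<forall>f\<in>l2. \<forall>g\<in>l2. \<forall>c::complex. T (\<lambda>i. c * f i + g i) = (\<lambda>i. c * T f i + T g i)) \<and>
     (\<exists>C. \<forall>f\<in>l2. l2norm (T f) \<le> C * l2norm f)"

definition opnorm :: "(('i \<Rightarrow> complex) \<Rightarrow> ('i \<Rightarrow> complex)) \<Rightarrow> real" where
  "opnorm T = Sup {l2norm (T f) | f. f \<in> l2 \<and> l2norm f \<le> 1}"

definition invertible_op :: "(('i \<Rightarrow> complex) \<Rightarrow> ('i \<Rightarrow> complex)) \<Rightarrow> bool" where
  "invertible_op S \<longleftrightarrow> bounded_op S \<and>
     (\<exists>R. bounded_op R \<and> (\<forall>f\<in>l2. R (S f) = f \<and> S (R f) = f))"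

definition op_spectrum :: "(('i \<Rightarrow> complex) \<Rightarrow> ('i \<Rightarrow> complex)) \<Rightarrow> complex set" where
  "op_spectrum T = {l. \<not> invertible_op (\<lambda>f i. l * f i - T f i)}"

definition quasinilpotent :: "(('i \<Rightarrow> complex) \<Rightarrow> ('i \<Rightarrow> complex)) \<Rightarrow> bool" where
  "quasinilpotent T \<longleftrightarrow> bounded_op T \<and> op_spectrum T = {0}"

definition resolvent :: "(('i \<Rightarrow> complex) \<Rightarrow> ('i \<Rightarrow> complex)) \<Rightarrow> complex \<Rightarrow> ('i \<Rightarrow> complex) \<Rightarrow> ('i \<Rightarrow> complex)" where
  "resolvent T l x = (THE y. y \<in> l2 \<and> (\<lambda>i. l * y i - T y i) = x)"

definition kx :: "(('i \<Rightarrow> complex) \<Rightarrow> ('i \<Rightarrow> complex)) \<Rightarrow> ('i \<Rightarrow> complex) \<Rightarrow> ereal" where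
  "kx T x = Limsup (at (0::complex))
     (\<lambda>l. ereal (ln (l2norm (resolvent T l x)) / ln (opnorm (resolvent T l))))"

definition power_set :: "(('i \<Rightarrow> complex) \<Rightarrow> ('i \<Rightarrow> complex)) \<Rightarrow> ereal set" where
  "power_set T = {kx T x | x. x \<in> l2 \<and> x \<noteq> (\<lambda>_. 0)}"

definition direct_sum :: "(nat \<Rightarrow> ((nat \<Rightarrow> complex) \<Rightarrow> (nat \<Rightarrow> complex))) \<Rightarrow>
    ((nat \<times> nat \<Rightarrow> complex) \<Rightarrow> (nat \<times> nat \<Rightarrow> complex))" where
  "direct_sum A f = (\<lambda>(k, n). A k (\<lambda>m. f (k, m)) n)"

end

theory Submission
  imports Defs "HOL-Real_Asymp.Real_Asymp"
begin


lemma l2I_bound: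
  fixes f :: "'i \<Rightarrow> complex"
  assumes "\<And>F. finite F \<Longrightarrow> (\<Sum>i\<in>F. (cmod (f i))\<^sup>2) \<le> C"
  shows "f \<in> l2" and "(\<Sum>\<^sub>\<infinity>i. (cmod (f i))\<^sup>2) \<le> C"
proof -
  have s: "(\<lambda>i. (cmod (f i))\<^sup>2) summable_on UNIV"
    by (rule nonneg_bdd_above_summable_on) (auto intro!: bdd_aboveI[where M=C] assms)
  then show "f \<in> l2" by (simp add: l2_def)
  show "(\<Sum>\<^sub>\<infinity>i. (cmod (f i))\<^sup>2) \<le> C"
    by (rule infsum_le_finite_sums[OF s]) (use assms in auto)
qed

lemma l2norm_nonneg: "l2norm f \<ge> 0"
proof -
  have "0 \<le> (\<Sum>\<^sub>\<infinity>i. (cmod (f i))\<^sup>2)" by (rule infsum_nonneg) simp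
  then show ?thesis unfolding l2norm_def by simp
qed

lemma l2norm_sq: "(l2norm f)\<^sup>2 = (\<Sum>\<^sub>\<infinity>i. (cmod (f i))\<^sup>2)"
proof -
  have "0 \<le> (\<Sum>\<^sub>\<infinity>i. (cmod (f i))\<^sup>2)" by (rule infsum_nonneg) simp
  then show ?thesis unfolding l2norm_def by simp
qed

lemma l2norm_le_bound:
  fixes f :: "'i \<Rightarrow> complex"
  assumes "\<And>F. finite F \<Longrightarrow> (\<Sum>i\<in>F. (cmod (f i))\<^sup>2) \<le> C\<^sup>2" "C \<ge> 0"
  shows "f \<in> l2" and "l2norm f \<le> C"
proof -
  show "f \<in> l2" using l2I_bound(1)[OF assms(1)] .
  have "(l2norm f)\<^sup>2 \<le> C\<^sup>2" using l2I_bound(2)[OF assms(1)] l2norm_sq[of f] by simp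
  then show "l2norm f \<le> C" using assms(2) l2norm_nonneg[of f] by (simp add: power_mono_iff)
qed

lemma finite_le_l2norm:
  fixes f :: "'i \<Rightarrow> complex"
  assumes "f \<in> l2" "finite F"
  shows "(\<Sum>i\<in>F. (cmod (f i))\<^sup>2) \<le> (l2norm f)\<^sup>2"
  unfolding l2norm_sq
  by (rule finite_sum_le_infsum) (use assms in \<open>auto simp: l2_def\<close>)

lemma coord_le_l2norm:
  fixes f :: "'i \<Rightarrow> complex"
  assumes "f \<in> l2"
  shows "cmod (f i) \<le> l2norm f"
proof -
  have "(cmod (f i))\<^sup>2 \<le> (l2norm f)\<^sup>2" using finite_le_l2norm[OF assms, of "{i}"] by simp
  then show ?thesis using l2norm_nonneg[of f] by (simp add: power_mono_iff)
qed

lemma l2norm_pos: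
  fixes f :: "'i \<Rightarrow> complex"
  assumes "f \<in> l2" "f \<noteq> (\<lambda>_. 0)"
  shows "l2norm f > 0"
proof -
  obtain i where "f i \<noteq> 0" using assms(2) by auto
  then have "cmod (f i) > 0" by simp
  then show ?thesis using coord_le_l2norm[OF assms(1), of i] by linarith
qed

lemma sq2: "(x + y)\<^sup>2 \<le> 2 * x\<^sup>2 + 2 * (y::real)\<^sup>2"
  using zero_le_power2[of "x - y"] by (simp add: power2_eq_square algebra_simps)

lemma l2_lin:
  fixes f g :: "'i \<Rightarrow> complex"
  assumes "f \<in> l2" "g \<in> l2"
  shows "(\<lambda>i. c * f i + g i) \<in> l2"
proof (rule l2I_bound(1))
  fix F :: "'i set" assume F: "finite F"
  have "(\<Sum>i\<in>F. (cmod (c * f i + g i))\<^sup>2) \<le> (\<Sum>i\<in>F. 2 * (cmod c)\<^sup>2 * (cmod (f i))\<^sup>2 + 2 * (cmod (g i))\<^sup>2)"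
  proof (rule sum_mono)
    fix i
    have "cmod (c * f i + g i) \<le> cmod c * cmod (f i) + cmod (g i)"
      by (metis norm_mult norm_triangle_ineq)
    then have "(cmod (c * f i + g i))\<^sup>2 \<le> (cmod c * cmod (f i) + cmod (g i))\<^sup>2"
      by (simp add: power_mono)
    also have "\<dots> \<le> 2 * (cmod c * cmod (f i))\<^sup>2 + 2 * (cmod (g i))\<^sup>2"
      using sq2[of "cmod c * cmod (f i)" "cmod (g i)"] .
    also have "\<dots> = 2 * (cmod c)\<^sup>2 * (cmod (f i))\<^sup>2 + 2 * (cmod (g i))\<^sup>2"
      by (simp add: power_mult_distrib)
    finally show "(cmod (c * f i + g i))\<^sup>2 \<le> 2 * (cmod c)\<^sup>2 * (cmod (f i))\<^sup>2 + 2 * (cmod (g i))\<^sup>2" .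
  qed
  also have "\<dots> = 2 * (cmod c)\<^sup>2 * (\<Sum>i\<in>F. (cmod (f i))\<^sup>2) + 2 * (\<Sum>i\<in>F. (cmod (g i))\<^sup>2)"
    by (simp add: sum.distrib sum_distrib_left)
  also have "\<dots> \<le> 2 * (cmod c)\<^sup>2 * (l2norm f)\<^sup>2 + 2 * (l2norm g)\<^sup>2"
    using finite_le_l2norm[OF assms(1) F] finite_le_l2norm[OF assms(2) F]
    by (intro add_mono mult_left_mono) auto
  finally show "(\<Sum>i\<in>F. (cmod (c * f i + g i))\<^sup>2) \<le> 2 * (cmod c)\<^sup>2 * (l2norm f)\<^sup>2 + 2 * (l2norm g)\<^sup>2" .
qed

lemma l2_zero: "(\<lambda>_. 0) \<in> l2"
  by (rule l2I_bound(1)[where C=0]) simp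

lemma l2norm_zero: "l2norm (\<lambda>_. 0) = 0"
  by (simp add: l2norm_def)

lemma l2_scale: "f \<in> l2 \<Longrightarrow> (\<lambda>i. c * f i) \<in> l2"
  using l2_lin[of f "\<lambda>_. 0" c] l2_zero by simp

lemma l2norm_scale:
  fixes f :: "'i \<Rightarrow> complex"
  shows "l2norm (\<lambda>i. c * f i) = cmod c * l2norm f"
proof -
  have "(\<Sum>\<^sub>\<infinity>i. (cmod (c * f i))\<^sup>2) = (cmod c)\<^sup>2 * (\<Sum>\<^sub>\<infinity>i. (cmod (f i))\<^sup>2)"
    by (simp add: norm_mult power_mult_distrib infsum_cmult_right')
  then show ?thesis unfolding l2norm_def by (simp add: real_sqrt_mult)
qed



lemma bop_lin: "bounded_op T \<Longrightarrow> f \<in> l2 \<Longrightarrow> g \<in> l2 \<Longrightarrow> T (\<lambda>i. c * f i + g i) = (\<lambda>i. c * T f i + T g i)"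
  unfolding bounded_op_def by blast

lemma bop_zero: assumes "bounded_op T" shows "T (\<lambda>_. 0) = (\<lambda>_. 0)"
proof -
  have "T (\<lambda>i. (-1) * 0 + 0) = (\<lambda>i. (-1) * T (\<lambda>_. 0) i + T (\<lambda>_. 0) i)"
    using bop_lin[OF assms l2_zero l2_zero, of "-1"] by simp
  then show ?thesis by simp
qed

lemma bop_scale: assumes "bounded_op T" "f \<in> l2" shows "T (\<lambda>i. c * f i) = (\<lambda>i. c * T f i)"
proof -
  have "T (\<lambda>i. c * f i + 0) = (\<lambda>i. c * T f i + T (\<lambda>_. 0) i)"
    using bop_lin[OF assms l2_zero, of c] by simp
  then show ?thesis using bop_zero[OF assms(1)] by simp
qed

lemma bop_l2: "bounded_op T \<Longrightarrow> f \<in> l2 \<Longrightarrow> T f \<in> l2"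
  unfolding bounded_op_def by blast

lemma bop_bdd:
  assumes "bounded_op T"
  shows "bdd_above {l2norm (T f) | f. f \<in> l2 \<and> l2norm f \<le> 1}"
proof -
  obtain C where C: "\<forall>f\<in>l2. l2norm (T f) \<le> C * l2norm f" using assms unfolding bounded_op_def by blast
  show ?thesis
  proof (rule bdd_aboveI[where M="max C 0"])
    fix y assume "y \<in> {l2norm (T f) | f. f \<in> l2 \<and> l2norm f \<le> 1}"
    then obtain f where f: "f \<in> l2" "l2norm f \<le> 1" "y = l2norm (T f)" by blast
    have "C * l2norm f \<le> max C 0"
    proof (cases "C \<ge> 0")
      case True then show ?thesis using f(2) l2norm_nonneg[of f] by (simp add: mult_left_le)
    next
      case False then show ?thesis using l2norm_nonneg[of f] by (simp add: mult_nonpos_nonneg)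
    qed
    then show "y \<le> max C 0" using C f by force
  qed
qed

lemma opnorm_ge:
  assumes "bounded_op T" "f \<in> l2" "l2norm f \<le> 1"
  shows "l2norm (T f) \<le> opnorm T"
  unfolding opnorm_def by (rule cSup_upper) (use assms bop_bdd in auto)

lemma opnorm_le:
  assumes "\<And>f. f \<in> l2 \<Longrightarrow> l2norm f \<le> 1 \<Longrightarrow> l2norm (T f) \<le> C"
  shows "opnorm T \<le> C"
proof -
  have "l2norm (T (\<lambda>_. 0)) \<in> {l2norm (T f) | f. f \<in> l2 \<and> l2norm f \<le> 1}"
    by (intro CollectI exI[of _ "\<lambda>_. 0"]) (simp add: l2_zero l2norm_zero)
  then have ne: "{l2norm (T f) | f. f \<in> l2 \<and> l2norm f \<le> 1} \<noteq> {}" by blast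
  show ?thesis unfolding opnorm_def by (rule cSup_least[OF ne]) (use assms in auto)
qed

lemma opnorm_le':
  assumes "\<And>f. f \<in> l2 \<Longrightarrow> l2norm (T f) \<le> C * l2norm f" "C \<ge> 0"
  shows "opnorm T \<le> C"
proof (rule opnorm_le)
  fix f :: "'a \<Rightarrow> complex" assume "f \<in> l2" "l2norm f \<le> 1"
  then have "C * l2norm f \<le> C" using assms(2) by (simp add: mult_left_le)
  then show "l2norm (T f) \<le> C" using assms(1)[OF \<open>f \<in> l2\<close>] by linarith
qed

lemma opnorm_cong:
  assumes "\<And>f. f \<in> l2 \<Longrightarrow> S f = T f"
  shows "opnorm S = opnorm T"
proof -
  have "{l2norm (S f) | f. f \<in> l2 \<and> l2norm f \<le> 1} = {l2norm (T f) | f. f \<in> l2 \<and> l2norm f \<le> 1}"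
    using assms by metis
  then show ?thesis unfolding opnorm_def by simp
qed

lemma l2_eq0: "f \<in> l2 \<Longrightarrow> l2norm f = 0 \<Longrightarrow> f = (\<lambda>_. 0)"
  using l2norm_pos by fastforce

lemma opnorm_bound:
  assumes "bounded_op T" "f \<in> l2"
  shows "l2norm (T f) \<le> opnorm T * l2norm f"
proof (cases "l2norm f = 0")
  case True
  then have "f = (\<lambda>_. 0)" using l2_eq0 assms by blast
  then show ?thesis using bop_zero[OF assms(1)] by (simp add: l2norm_zero)
next
  case False
  then have pos: "l2norm f > 0" using l2norm_nonneg[of f] by simp
  define g where "g = (\<lambda>i. complex_of_real (1 / l2norm f) * f i)"
  have g: "g \<in> l2" unfolding g_def using l2_scale[OF assms(2)] .
  have ng: "l2norm g = 1" unfolding g_def l2norm_scale using pos by (simp add: norm_divide)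
  have "l2norm (T g) \<le> opnorm T" using opnorm_ge[OF assms(1) g] ng by simp
  moreover have "T g = (\<lambda>i. complex_of_real (1 / l2norm f) * T f i)"
    unfolding g_def by (rule bop_scale[OF assms])
  then have "l2norm (T g) = cmod (complex_of_real (1 / l2norm f)) * l2norm (T f)"
    by (simp only: l2norm_scale)
  then have "l2norm (T g) = l2norm (T f) / l2norm f"
    using pos by (simp add: norm_divide)
  ultimately show ?thesis using pos by (simp add: field_simps)
qed

lemma l2_triangle:
  fixes f g :: "'i \<Rightarrow> complex"
  assumes "f \<in> l2" "g \<in> l2"
  shows "l2norm (\<lambda>i. f i + g i) \<le> l2norm f + l2norm g"
proof (rule l2norm_le_bound(2))
  fix F :: "'i set" assume F: "finite F"
  define A where "A = (\<Sum>i\<in>F. (cmod (f i))\<^sup>2)"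
  define B where "B = (\<Sum>i\<in>F. (cmod (g i))\<^sup>2)"
  have A0: "A \<ge> 0" "B \<ge> 0" unfolding A_def B_def by (auto intro: sum_nonneg)
  have cs: "(\<Sum>i\<in>F. cmod (f i) * cmod (g i))\<^sup>2 \<le> A * B"
    unfolding A_def B_def by (rule Cauchy_Schwarz_ineq_sum)
  have cs2: "(\<Sum>i\<in>F. cmod (f i) * cmod (g i)) \<le> sqrt A * sqrt B"
    using cs A0 by (metis real_le_rsqrt real_sqrt_mult)
  have "(\<Sum>i\<in>F. (cmod (f i + g i))\<^sup>2) \<le> (\<Sum>i\<in>F. (cmod (f i) + cmod (g i))\<^sup>2)"
    by (intro sum_mono power_mono norm_triangle_ineq) auto
  also have "\<dots> = A + 2 * (\<Sum>i\<in>F. cmod (f i) * cmod (g i)) + B"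
    unfolding A_def B_def by (simp add: power2_sum sum.distrib sum_distrib_left mult.assoc)
  also have "\<dots> \<le> A + 2 * (sqrt A * sqrt B) + B" using cs2 by simp
  also have "\<dots> = (sqrt A + sqrt B)\<^sup>2" using A0 by (simp add: power2_sum)
  also have "\<dots> \<le> (l2norm f + l2norm g)\<^sup>2"
  proof -
    have "sqrt A \<le> l2norm f" using finite_le_l2norm[OF assms(1) F] l2norm_nonneg[of f]
      unfolding A_def by (simp add: real_sqrt_le_iff real_le_lsqrt)
    moreover have "sqrt B \<le> l2norm g" using finite_le_l2norm[OF assms(2) F] l2norm_nonneg[of g]
      unfolding B_def by (simp add: real_le_lsqrt)
    ultimately show ?thesis using A0 by (intro power_mono add_mono) auto
  qed
  finally show "(\<Sum>i\<in>F. (cmod (f i + g i))\<^sup>2) \<le> (l2norm f + l2norm g)\<^sup>2" .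
next
  show "0 \<le> l2norm f + l2norm g" using l2norm_nonneg[of f] l2norm_nonneg[of g] by simp
qed

lemma bop_minus:
  assumes "bounded_op T"
  shows "bounded_op (\<lambda>f i. l * f i - T f i)"
proof -
  obtain C where C: "\<forall>f\<in>l2. l2norm (T f) \<le> C * l2norm f" using assms unfolding bounded_op_def by blast
  have l2: "(\<lambda>i. l * f i - T f i) \<in> l2" if "f \<in> l2" for f
  proof -
    have "(\<lambda>i. l * f i + (-1) * T f i) \<in> l2"
      using l2_lin[OF that l2_scale[OF bop_l2[OF assms that], of "-1"], of l] .
    then show ?thesis by simp
  qed
  have lin: "(\<lambda>i. l * (c * f i + g i) - T (\<lambda>i. c * f i + g i) i) =
     (\<lambda>i. c * (l * f i - T f i) + (l * g i - T g i))" if "f \<in> l2" "g \<in> l2" for f g c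
    using assms that unfolding bounded_op_def by (auto simp: algebra_simps)
  have bd: "l2norm (\<lambda>i. l * f i - T f i) \<le> (cmod l + max C 0) * l2norm f" if f: "f \<in> l2" for f
  proof -
    have "l2norm (\<lambda>i. l * f i - T f i) = l2norm (\<lambda>i. (\<lambda>i. l * f i) i + (\<lambda>i. (-1) * T f i) i)" by simp
    also have "\<dots> \<le> l2norm (\<lambda>i. l * f i) + l2norm (\<lambda>i. (-1) * T f i)"
      by (rule l2_triangle[OF l2_scale[OF f] l2_scale[OF bop_l2[OF assms f]]])
    also have "\<dots> = cmod l * l2norm f + l2norm (T f)"
      using l2norm_scale[of "-1" "T f"] by (simp add: l2norm_scale)
    also have "\<dots> \<le> cmod l * l2norm f + max C 0 * l2norm f"
    proof -
      have "l2norm (T f) \<le> C * l2norm f" using C f by blast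
      moreover have "C * l2norm f \<le> max C 0 * l2norm f"
        by (rule mult_right_mono) (auto simp: l2norm_nonneg)
      ultimately show ?thesis by linarith
    qed
    finally show ?thesis by (simp add: algebra_simps)
  qed
  show ?thesis unfolding bounded_op_def using l2 lin bd by blast
qed



definition wsh :: "real \<Rightarrow> (nat \<Rightarrow> complex) \<Rightarrow> nat \<Rightarrow> complex" where
  "wsh c f n = (if n = 0 then 0 else complex_of_real (c / sqrt (real n)) * f (n - 1))"

fun res :: "real \<Rightarrow> complex \<Rightarrow> (nat \<Rightarrow> complex) \<Rightarrow> nat \<Rightarrow> complex" where
  "res c l x 0 = x 0 / l"
| "res c l x (Suc n) = (x (Suc n) + complex_of_real (c / sqrt (real (Suc n))) * res c l x n) / l"

lemma wsh_bound:
  assumes "c \<ge> 0" "f \<in> l2"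
  shows "wsh c f \<in> l2" "l2norm (wsh c f) \<le> c * l2norm f"
proof -
  have "(\<Sum>n\<in>F. (cmod (wsh c f n))\<^sup>2) \<le> (c * l2norm f)\<^sup>2" if F: "finite F" for F
  proof -
    have "(\<Sum>n\<in>F. (cmod (wsh c f n))\<^sup>2) = (\<Sum>n\<in>F-{0}. (cmod (wsh c f n))\<^sup>2)"
      by (rule sum.mono_neutral_right) (auto simp: F wsh_def)
    also have "\<dots> \<le> (\<Sum>n\<in>F-{0}. c\<^sup>2 * (cmod (f (n - 1)))\<^sup>2)"
    proof (rule sum_mono)
      fix n assume "n \<in> F - {0}"
      then have n: "n \<ge> 1" by auto
      have "(cmod (wsh c f n))\<^sup>2 = (c / sqrt (real n))\<^sup>2 * (cmod (f (n - 1)))\<^sup>2"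
        using n by (simp add: wsh_def norm_mult power_mult_distrib power_divide del: of_real_divide)
      also have "\<dots> \<le> c\<^sup>2 * (cmod (f (n - 1)))\<^sup>2"
      proof (rule mult_right_mono)
        have "(c / sqrt (real n))\<^sup>2 = c\<^sup>2 / real n" using n by (simp add: power_divide)
        also have "\<dots> \<le> c\<^sup>2"
        proof -
          have "c\<^sup>2 \<le> c\<^sup>2 * real n" using n by (simp add: mult_le_cancel_left1)
          then show ?thesis using n by (simp add: divide_le_eq)
        qed
        finally show "(c / sqrt (real n))\<^sup>2 \<le> c\<^sup>2" .
      qed simp
      finally show "(cmod (wsh c f n))\<^sup>2 \<le> c\<^sup>2 * (cmod (f (n - 1)))\<^sup>2" .
    qed
    also have "\<dots> = c\<^sup>2 * (\<Sum>n\<in>F-{0}. (cmod (f (n - 1)))\<^sup>2)" by (simp add: sum_distrib_left)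
    also have "(\<Sum>n\<in>F-{0}. (cmod (f (n - 1)))\<^sup>2) = (\<Sum>m\<in>(\<lambda>n. n - 1) ` (F-{0}). (cmod (f m))\<^sup>2)"
      by (subst sum.reindex) (auto simp: inj_on_def)
    also have "\<dots> \<le> (l2norm f)\<^sup>2" by (rule finite_le_l2norm[OF assms(2)]) (use F in auto)
    finally show ?thesis by (simp add: power_mult_distrib mult_left_mono)
  qed
  then show "wsh c f \<in> l2" "l2norm (wsh c f) \<le> c * l2norm f"
    using l2norm_le_bound[of "wsh c f" "c * l2norm f"] assms l2norm_nonneg[of f] by auto
qed

lemma wsh_lin: "wsh c (\<lambda>i. a * f i + g i) = (\<lambda>i. a * wsh c f i + wsh c g i)"
  by (auto simp: wsh_def fun_eq_iff algebra_simps)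

lemma wsh_bop: "c \<ge> 0 \<Longrightarrow> bounded_op (wsh c)"
  unfolding bounded_op_def using wsh_bound wsh_lin by blast

lemma res_eq: "l \<noteq> 0 \<Longrightarrow> l * res c l x n - wsh c (res c l x) n = x n"
  by (cases n) (auto simp: wsh_def)

lemma wsh_inj:
  assumes "l \<noteq> 0" "\<And>n. l * y n - wsh c y n = 0"
  shows "y n = 0"
proof (induction n)
  case 0 then show ?case using assms(2)[of 0] assms(1) by (simp add: wsh_def)
next
  case (Suc n) then show ?case using assms(2)[of "Suc n"] assms(1) by (simp add: wsh_def)
qed

lemma res_unique:
  assumes "l \<noteq> 0" "\<And>n. l * y n - wsh c y n = x n"
  shows "y = res c l x"
proof -
  have "(\<lambda>n. y n - res c l x n) n = 0" for n
  proof (rule wsh_inj[OF assms(1)])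
    fix n
    have "wsh c (\<lambda>i. y i - res c l x i) = (\<lambda>i. wsh c y i - wsh c (res c l x) i)"
      using wsh_lin[of c 1 y "\<lambda>i. - res c l x i"] wsh_lin[of c "-1" "res c l x" "\<lambda>_. 0"]
      by (auto simp: wsh_def fun_eq_iff algebra_simps)
    then show "l * (y n - res c l x n) - wsh c (\<lambda>n. y n - res c l x n) n = 0"
      using assms(2)[of n] res_eq[OF assms(1), of c x n] by (simp add: algebra_simps)
  qed
  then show ?thesis by auto
qed

lemma res_closed:
  "res c l x n = (\<Sum>i\<le>n. x i * complex_of_real (c ^ (n - i) * sqrt (fact i / fact n)) / l ^ (n - i + 1))"
proof (induction n)
  case 0 then show ?case by simp
next
  case (Suc n)
  have fS: "fact (Suc n) = real (Suc n) * fact n" by simp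
  have "res c l x (Suc n) = (x (Suc n) + complex_of_real (c / sqrt (real (Suc n))) *
      (\<Sum>i\<le>n. x i * complex_of_real (c ^ (n - i) * sqrt (fact i / fact n)) / l ^ (n - i + 1))) / l"
    using Suc by simp
  also have "\<dots> = x (Suc n) / l + (\<Sum>i\<le>n. x i * complex_of_real (c ^ (Suc n - i) * sqrt (fact i / fact (Suc n))) / l ^ (Suc n - i + 1))"
  proof -
    have tm: "complex_of_real (c / sqrt (real (Suc n))) * (x i * complex_of_real (c ^ (n - i) * sqrt (fact i / fact n)) / l ^ (n - i + 1)) / l
        = x i * complex_of_real (c ^ (Suc n - i) * sqrt (fact i / fact (Suc n))) / l ^ (Suc n - i + 1)" if "i \<le> n" for i
    proof -
      have e: "Suc n - i = Suc (n - i)" using that by simp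
      have "c / sqrt (real (Suc n)) * (c ^ (n - i) * sqrt (fact i / fact n)) = c ^ (Suc n - i) * sqrt (fact i / fact (Suc n))"
      proof -
        have e2: "sqrt (fact i / (real (Suc n) * fact n)) = sqrt (fact i / fact n) / sqrt (real (Suc n))"
          by (simp add: real_sqrt_divide real_sqrt_mult)
        have "c / sqrt (real (Suc n)) * (c ^ (n - i) * sqrt (fact i / fact n)) = c ^ Suc (n - i) * (sqrt (fact i / fact n) / sqrt (real (Suc n)))"
          by simp
        then show ?thesis unfolding e fS e2 .
      qed
      then have r: "complex_of_real (c / sqrt (real (Suc n))) * complex_of_real (c ^ (n - i) * sqrt (fact i / fact n))
          = complex_of_real (c ^ (Suc n - i) * sqrt (fact i / fact (Suc n)))"
        by (simp only: of_real_mult[symmetric])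
      have g: "\<And>a b d ee (ll::complex). a * (b * d / ee) / ll = b * (a * d) / (ee * ll)" by (simp add: field_simps)
      have p: "l ^ (n - i + 1) * l = l ^ (Suc n - i + 1)" unfolding e by simp
      show ?thesis unfolding g r p ..
    qed
    define a where "a = complex_of_real (c / sqrt (real (Suc n)))"
    have "a * (\<Sum>i\<le>n. x i * complex_of_real (c ^ (n - i) * sqrt (fact i / fact n)) / l ^ (n - i + 1)) / l
        = (\<Sum>i\<le>n. a * (x i * complex_of_real (c ^ (n - i) * sqrt (fact i / fact n)) / l ^ (n - i + 1)) / l)"
      by (simp only: sum_distrib_left sum_divide_distrib)
    also have "\<dots> = (\<Sum>i\<le>n. x i * complex_of_real (c ^ (Suc n - i) * sqrt (fact i / fact (Suc n))) / l ^ (Suc n - i + 1))"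
      unfolding a_def by (rule sum.cong[OF refl], rule tm) simp
    finally have "a * (\<Sum>i\<le>n. x i * complex_of_real (c ^ (n - i) * sqrt (fact i / fact n)) / l ^ (n - i + 1)) / l = 
      (\<Sum>i\<le>n. x i * complex_of_real (c ^ (Suc n - i) * sqrt (fact i / fact (Suc n))) / l ^ (Suc n - i + 1))" .
    then show ?thesis unfolding a_def by (simp only: add_divide_distrib)
  qed
  also have "\<dots> = (\<Sum>i\<le>Suc n. x i * complex_of_real (c ^ (Suc n - i) * sqrt (fact i / fact (Suc n))) / l ^ (Suc n - i + 1))"
    by (simp add: add.commute)
  finally show ?case .
qed



lemma exp_partial:
  assumes "(t::real) \<ge> 0"
  shows "(\<Sum>m\<le>N. t ^ m / fact m) \<le> exp t"
proof -
  have s: "(\<lambda>m. t ^ m / fact m) sums exp t" using exp_converges[of t] by (simp add: divide_inverse mult.commute)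
  have "(\<Sum>m\<le>N. t ^ m / fact m) \<le> suminf (\<lambda>m. t ^ m / fact m)"
    by (rule sum_le_suminf) (use s assms in \<open>auto simp: sums_iff\<close>)
  then show ?thesis using s by (simp add: sums_iff)
qed

lemma geom_bound:
  assumes "(q::real) > 1"
  shows "(\<Sum>i\<le>n. (1/q) ^ (n - i)) \<le> q / (q - 1)"
proof -
  have "(\<Sum>i\<le>n. (1/q) ^ (n - i)) = (\<Sum>i<Suc n. (1/q) ^ (Suc n - Suc i))"
    by (simp add: lessThan_Suc_atMost)
  also have "\<dots> = (\<Sum>i<Suc n. (1/q) ^ i)" by (rule sum.nat_diff_reindex)
  also have "\<dots> = (1 - (1/q) ^ Suc n) / (1 - 1/q)" using assms by (subst sum_gp_strict) auto
  also have "\<dots> \<le> 1 / (1 - 1/q)"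
    using assms by (intro divide_right_mono) (auto simp: field_simps)
  also have "\<dots> = q / (q - 1)" using assms by (simp add: field_simps)
  finally show ?thesis .
qed

lemma conv_bound:
  fixes y a :: "nat \<Rightarrow> real"
  assumes q: "q > 1" and y: "\<And>i. y i \<ge> 0" and a: "\<And>i. a i \<ge> 0"
  shows "(\<Sum>n\<le>N. (\<Sum>i\<le>n. y i * a (n - i))\<^sup>2) \<le> q / (q - 1) * (\<Sum>m\<le>N. q ^ m * (a m)\<^sup>2) * (\<Sum>i\<le>N. (y i)\<^sup>2)"
proof -
  have step: "(\<Sum>i\<le>n. y i * a (n - i))\<^sup>2 \<le> q / (q - 1) * (\<Sum>i\<le>n. (y i)\<^sup>2 * (q ^ (n - i) * (a (n - i))\<^sup>2))" for n
  proof -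
    have e: "y i * a (n - i) = sqrt ((1/q) ^ (n - i)) * (sqrt (q ^ (n - i)) * a (n - i) * y i)" for i
    proof -
      have "sqrt ((1/q) ^ (n - i)) * sqrt (q ^ (n - i)) = 1"
        using q by (simp add: real_sqrt_mult[symmetric] power_mult_distrib[symmetric])
      then show ?thesis by (metis mult.assoc mult.commute mult_1)
    qed
    have "(\<Sum>i\<le>n. y i * a (n - i))\<^sup>2 = (\<Sum>i\<le>n. sqrt ((1/q) ^ (n - i)) * (sqrt (q ^ (n - i)) * a (n - i) * y i))\<^sup>2"
      by (simp only: e)
    also have "\<dots> \<le> (\<Sum>i\<le>n. (sqrt ((1/q) ^ (n - i)))\<^sup>2) * (\<Sum>i\<le>n. (sqrt (q ^ (n - i)) * a (n - i) * y i)\<^sup>2)"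
      by (rule Cauchy_Schwarz_ineq_sum)
    also have "(\<Sum>i\<le>n. (sqrt ((1/q) ^ (n - i)))\<^sup>2) = (\<Sum>i\<le>n. (1/q) ^ (n - i))"
      using q by simp
    also have "(\<Sum>i\<le>n. (sqrt (q ^ (n - i)) * a (n - i) * y i)\<^sup>2) = (\<Sum>i\<le>n. (y i)\<^sup>2 * (q ^ (n - i) * (a (n - i))\<^sup>2))"
      using q by (simp add: power_mult_distrib mult_ac)
    also have "(\<Sum>i\<le>n. (1/q) ^ (n - i)) * (\<Sum>i\<le>n. (y i)\<^sup>2 * (q ^ (n - i) * (a (n - i))\<^sup>2))
        \<le> q / (q - 1) * (\<Sum>i\<le>n. (y i)\<^sup>2 * (q ^ (n - i) * (a (n - i))\<^sup>2))"
      by (rule mult_right_mono[OF geom_bound[OF q]]) (use q in \<open>auto intro!: sum_nonneg\<close>)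
    finally show ?thesis .
  qed
  have "(\<Sum>n\<le>N. (\<Sum>i\<le>n. y i * a (n - i))\<^sup>2) \<le> (\<Sum>n\<le>N. q / (q - 1) * (\<Sum>i\<le>n. (y i)\<^sup>2 * (q ^ (n - i) * (a (n - i))\<^sup>2)))"
    by (rule sum_mono) (rule step)
  also have "\<dots> = q / (q - 1) * (\<Sum>n\<le>N. (\<Sum>i\<le>n. (y i)\<^sup>2 * (q ^ (n - i) * (a (n - i))\<^sup>2)))"
    by (simp add: sum_distrib_left)
  also have "(\<Sum>n\<le>N. (\<Sum>i\<le>n. (y i)\<^sup>2 * (q ^ (n - i) * (a (n - i))\<^sup>2)))
      = (\<Sum>(i,j)\<in>{(i,j). i + j \<le> N}. (y i)\<^sup>2 * (q ^ j * (a j)\<^sup>2))"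
    by (rule sum.triangle_reindex_eq[symmetric])
  also have "\<dots> \<le> (\<Sum>(i,j)\<in>{..N} \<times> {..N}. (y i)\<^sup>2 * (q ^ j * (a j)\<^sup>2))"
    by (rule sum_mono2) (use q in auto)
  also have "\<dots> = (\<Sum>i\<le>N. (y i)\<^sup>2) * (\<Sum>m\<le>N. q ^ m * (a m)\<^sup>2)"
    by (simp add: sum_product sum.cartesian_product)
  finally show ?thesis using q by (simp add: mult_ac divide_le_cancel mult_left_mono)
qed



definition aco :: "real \<Rightarrow> real \<Rightarrow> nat \<Rightarrow> real" where
  "aco c r m = c ^ m * r ^ (m + 1) / sqrt (fact m)"

lemma fact_split_le: "i \<le> n \<Longrightarrow> (fact i * fact (n - i) :: real) \<le> fact n"
proof -
  assume "i \<le> n"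
  then have "fact i * fact (n - i) * (n choose i) = (fact n :: nat)" by (rule binomial_fact_lemma)
  moreover have "n choose i \<ge> 1" using \<open>i \<le> n\<close> by (simp add: Suc_leI)
  ultimately have "fact i * fact (n - i) \<le> (fact n :: nat)"
    by (metis le_square mult.right_neutral mult_le_mono2 nat_mult_le_cancel_disj)
  then show ?thesis by (metis of_nat_fact of_nat_le_iff of_nat_mult)
qed

lemma res_coord_bound:
  assumes c: "c \<ge> 0" and l: "l \<noteq> 0"
  shows "cmod (res c l x n) \<le> (\<Sum>i\<le>n. cmod (x i) * aco c (1 / cmod l) (n - i))"
proof -
  have "cmod (res c l x n) \<le> (\<Sum>i\<le>n. cmod (x i * complex_of_real (c ^ (n - i) * sqrt (fact i / fact n)) / l ^ (n - i + 1)))"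
    unfolding res_closed by (rule norm_sum)
  also have "\<dots> \<le> (\<Sum>i\<le>n. cmod (x i) * aco c (1 / cmod l) (n - i))"
  proof (rule sum_mono)
    fix i assume "i \<in> {..n}"
    then have i: "i \<le> n" by simp
    have fs: "sqrt (fact i / fact n) \<le> 1 / sqrt (fact (n - i))"
    proof -
      have "fact i / fact n \<le> 1 / (fact (n - i) :: real)"
        using fact_split_le[OF i] by (simp add: field_simps)
      then show ?thesis by (metis real_sqrt_divide real_sqrt_le_iff real_sqrt_one)
    qed
    have "cmod (x i * complex_of_real (c ^ (n - i) * sqrt (fact i / fact n)) / l ^ (n - i + 1))
        = cmod (x i) * (c ^ (n - i) * sqrt (fact i / fact n)) * (1 / cmod l) ^ (n - i + 1)"
      using c by (simp add: norm_mult norm_divide norm_power power_one_over abs_mult)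
    also have "\<dots> \<le> cmod (x i) * (c ^ (n - i) * (1 / sqrt (fact (n - i)))) * (1 / cmod l) ^ (n - i + 1)"
      using c fs by (intro mult_right_mono mult_left_mono) auto
    also have "\<dots> = cmod (x i) * aco c (1 / cmod l) (n - i)"
      unfolding aco_def by (simp add: mult_ac)
    finally show "cmod (x i * complex_of_real (c ^ (n - i) * sqrt (fact i / fact n)) / l ^ (n - i + 1))
        \<le> cmod (x i) * aco c (1 / cmod l) (n - i)" .
  qed
  finally show ?thesis .
qed

lemma aco_sum:
  assumes "c \<ge> 0" "r \<ge> 0" "q > 0"
  shows "(\<Sum>m\<le>N. q ^ m * (aco c r m)\<^sup>2) \<le> r\<^sup>2 * exp (q * c\<^sup>2 * r\<^sup>2)"
proof -
  have "(\<Sum>m\<le>N. q ^ m * (aco c r m)\<^sup>2) = r\<^sup>2 * (\<Sum>m\<le>N. (q * c\<^sup>2 * r\<^sup>2) ^ m / fact m)"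
    unfolding sum_distrib_left
  proof (rule sum.cong[OF refl])
    fix m
    have p: "\<And>z::real. (z ^ m)\<^sup>2 = (z\<^sup>2) ^ m" by (metis power_mult mult.commute)
    have "(aco c r m)\<^sup>2 = (c\<^sup>2) ^ m * ((r\<^sup>2) ^ m * r\<^sup>2) / fact m"
      unfolding aco_def power_divide power_mult_distrib by (simp add: p power_mult_distrib)
    then show "q ^ m * (aco c r m)\<^sup>2 = r\<^sup>2 * ((q * c\<^sup>2 * r\<^sup>2) ^ m / fact m)"
      by (simp add: power_mult_distrib)
  qed
  also have "\<dots> \<le> r\<^sup>2 * exp (q * c\<^sup>2 * r\<^sup>2)"
    using assms by (intro mult_left_mono exp_partial) auto
  finally show ?thesis .
qed

lemma aco_nonneg: "c \<ge> 0 \<Longrightarrow> r \<ge> 0 \<Longrightarrow> aco c r m \<ge> 0"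
  unfolding aco_def by simp

definition resbd :: "real \<Rightarrow> real \<Rightarrow> real \<Rightarrow> real" where
  "resbd q c r = sqrt (q / (q - 1) * (r\<^sup>2 * exp (q * c\<^sup>2 * r\<^sup>2)))"

lemma res_l2:
  assumes c: "c \<ge> 0" and l: "l \<noteq> 0" and x: "x \<in> l2" and q: "q > 1"
  shows "res c l x \<in> l2" "l2norm (res c l x) \<le> resbd q c (1 / cmod l) * l2norm x"
proof -
  define r where "r = 1 / cmod l"
  have r: "r \<ge> 0" unfolding r_def by simp
  define E where "E = q / (q - 1) * (r\<^sup>2 * exp (q * c\<^sup>2 * r\<^sup>2))"
  have E: "E \<ge> 0" unfolding E_def using q by simp
  have fin: "(\<Sum>n\<in>F. (cmod (res c l x n))\<^sup>2) \<le> (sqrt E * l2norm x)\<^sup>2" if F: "finite F" for F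
  proof -
    obtain N where N: "F \<subseteq> {..N}" using F finite_nat_iff_bounded_le by auto
    have "(\<Sum>n\<in>F. (cmod (res c l x n))\<^sup>2) \<le> (\<Sum>n\<le>N. (cmod (res c l x n))\<^sup>2)"
      by (rule sum_mono2) (use N in auto)
    also have "\<dots> \<le> (\<Sum>n\<le>N. (\<Sum>i\<le>n. cmod (x i) * aco c r (n - i))\<^sup>2)"
      by (intro sum_mono power_mono) (auto simp: r_def res_coord_bound[OF c l])
    also have "\<dots> \<le> q / (q - 1) * (\<Sum>m\<le>N. q ^ m * (aco c r m)\<^sup>2) * (\<Sum>i\<le>N. (cmod (x i))\<^sup>2)"
      by (rule conv_bound[OF q]) (auto simp: aco_nonneg c r)
    also have "\<dots> \<le> q / (q - 1) * (r\<^sup>2 * exp (q * c\<^sup>2 * r\<^sup>2)) * (l2norm x)\<^sup>2"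
      using q aco_sum[OF c r, of q N] finite_le_l2norm[OF x, of "{..N}"]
      by (intro mult_mono) (auto intro!: sum_nonneg)
    also have "\<dots> = (sqrt E * l2norm x)\<^sup>2" using E unfolding E_def by (simp add: power_mult_distrib)
    finally show ?thesis .
  qed
  show "res c l x \<in> l2" using l2norm_le_bound(1)[OF fin] E l2norm_nonneg[of x] by simp
  show "l2norm (res c l x) \<le> resbd q c (1 / cmod l) * l2norm x"
    using l2norm_le_bound(2)[OF fin] E l2norm_nonneg[of x] unfolding resbd_def E_def r_def by simp
qed



lemma res_lin:
  assumes "l \<noteq> 0"
  shows "res c l (\<lambda>i. a * f i + g i) = (\<lambda>i. a * res c l f i + res c l g i)"
proof (rule res_unique[OF assms, symmetric])
  fix n
  show "l * (a * res c l f n + res c l g n) - wsh c (\<lambda>i. a * res c l f i + res c l g i) n = a * f n + g n"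
    using res_eq[OF assms, of c f n] res_eq[OF assms, of c g n] unfolding wsh_lin
    by (simp add: algebra_simps)
qed

lemma res_bop:
  assumes "c \<ge> 0" "l \<noteq> 0"
  shows "bounded_op (res c l)"
  unfolding bounded_op_def using res_l2[OF assms, of _ 2] res_lin[OF assms(2)] by auto

definition e0 :: "nat \<Rightarrow> complex" where "e0 = (\<lambda>n. if n = 0 then 1 else 0)"

lemma e0_l2: "e0 \<in> l2" and e0_norm: "l2norm e0 = 1"
proof -
  have h: "(\<Sum>n\<in>F. (cmod (e0 n))\<^sup>2) = (if 0 \<in> F then 1 else 0)" if "finite F" for F
  proof -
    have "(\<Sum>n\<in>F. (cmod (e0 n))\<^sup>2) = (\<Sum>n\<in>F. if n = 0 then 1 else 0)"
      by (rule sum.cong) (auto simp: e0_def)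
    then show ?thesis using that by (simp add: sum.delta)
  qed
  show "e0 \<in> l2" by (rule l2I_bound(1)[where C=1]) (simp add: h)
  have "l2norm e0 \<le> 1" by (rule l2norm_le_bound(2)[where C=1]) (auto simp: h)
  moreover have "cmod (e0 0) \<le> l2norm e0" by (rule coord_le_l2norm[OF \<open>e0 \<in> l2\<close>])
  ultimately show "l2norm e0 = 1" by (simp add: e0_def)
qed

lemma wsh_inv:
  assumes "c \<ge> 0" "l \<noteq> 0"
  shows "invertible_op (\<lambda>f i. l * f i - wsh c f i)"
  unfolding invertible_op_def
proof (intro conjI exI[of _ "res c l"])
  show "bounded_op (\<lambda>f i. l * f i - wsh c f i)" by (rule bop_minus[OF wsh_bop[OF assms(1)]])
  show "bounded_op (res c l)" by (rule res_bop[OF assms])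
  show "\<forall>f\<in>l2. res c l (\<lambda>i. l * f i - wsh c f i) = f \<and> (\<lambda>i. l * res c l f i - wsh c (res c l f) i) = f"
    using res_unique[OF assms(2)] res_eq[OF assms(2)] by auto
qed

lemma wsh_not_inv0: "\<not> invertible_op (\<lambda>f i. 0 * f i - wsh c f i)"
proof
  assume "invertible_op (\<lambda>f i. 0 * f i - wsh c f i)"
  then obtain R where "\<forall>f\<in>l2. (\<lambda>i. 0 * R f i - wsh c (R f) i) = f" unfolding invertible_op_def by blast
  then have "(\<lambda>i. 0 * R e0 i - wsh c (R e0) i) = e0" using e0_l2 by blast
  then have "0 * R e0 0 - wsh c (R e0) 0 = e0 0" by metis
  then show False by (simp add: wsh_def e0_def)
qed

lemma wsh_qn: "c \<ge> 0 \<Longrightarrow> quasinilpotent (wsh c)"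
  unfolding quasinilpotent_def op_spectrum_def
  using wsh_bop wsh_inv wsh_not_inv0 by auto

lemma resolvent_wsh:
  assumes "l \<noteq> 0" "c \<ge> 0" "x \<in> l2"
  shows "resolvent (wsh c) l x = res c l x"
  unfolding resolvent_def
proof (rule the_equality)
  show "res c l x \<in> l2 \<and> (\<lambda>i. l * res c l x i - wsh c (res c l x) i) = x"
    using res_l2(1)[OF assms(2,1,3), of 2] res_eq[OF assms(1)] by auto
  fix y assume "y \<in> l2 \<and> (\<lambda>i. l * y i - wsh c y i) = x"
  then show "y = res c l x" using res_unique[OF assms(1)] by metis
qed

lemma opnorm_resolvent_wsh:
  assumes "l \<noteq> 0" "c \<ge> 0"
  shows "opnorm (resolvent (wsh c) l) = opnorm (res c l)"
  by (rule opnorm_cong) (use resolvent_wsh[OF assms] in auto)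



lemma root_orth:
  fixes N a b :: nat
  assumes N: "N > 0" and a: "a < N" and b: "b < N"
  shows "(\<Sum>j<N. cis (2 * pi / N) ^ (j * a) * cnj (cis (2 * pi / N) ^ (j * b))) = (if a = b then of_nat N else 0)"
proof -
  define z where "z = cis (2 * pi * (real a - real b) / N)"
  have t: "cis (2 * pi / N) ^ (j * a) * cnj (cis (2 * pi / N) ^ (j * b)) = z ^ j" for j
  proof -
    have "cis (2 * pi / N) ^ (j * a) * cnj (cis (2 * pi / N) ^ (j * b))
        = cis (real (j * a) * (2 * pi / N)) * cis (- (real (j * b) * (2 * pi / N)))"
      by (simp add: Complex.DeMoivre cis_cnj)
    also have "\<dots> = cis (real j * (2 * pi * (real a - real b) / N))"
      by (simp add: cis_mult algebra_simps diff_divide_distrib)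
    also have "\<dots> = z ^ j" unfolding z_def by (simp add: Complex.DeMoivre)
    finally show ?thesis .
  qed
  show ?thesis
  proof (cases "a = b")
    case True
    then have "z = 1" unfolding z_def by simp
    show ?thesis unfolding t using \<open>z = 1\<close> True by simp
  next
    case False
    have zN: "z ^ N = 1"
    proof -
      have "real N * (2 * pi * (real a - real b) / real N) = 2 * pi * of_int (int a - int b)"
        using N by simp
      then have "z ^ N = cis (2 * pi * of_int (int a - int b))"
        unfolding z_def Complex.DeMoivre by metis
      then show ?thesis by (simp del: of_int_diff)
    qed
    have z1: "z \<noteq> 1"
    proof
      assume "z = 1"
      then have "cos (2 * pi * (real a - real b) / N) = 1" unfolding z_def
        by (metis Re_complex_of_real cis.sel(1) one_complex.sel(1))
      then obtain n :: int where n: "2 * pi * (real a - real b) / N = of_int n * 2 * pi"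
        using cos_one_2pi_int by blast
      then have "2 * pi * ((real a - real b) - of_int n * N) = 0" using N by (simp add: field_simps)
      then have "real a - real b = n * N" by simp
      then have "int a - int b = n * int N" by (metis of_int_eq_iff of_int_mult of_int_of_nat_eq of_int_diff)
      moreover have "\<bar>int a - int b\<bar> < int N" using a b by linarith
      moreover have "int a - int b \<noteq> 0" using False by simp
      ultimately show False
        by (metis abs_mult abs_of_nat mult_cancel_right1 mult_le_cancel_right1 not_less
            of_nat_0_less_iff N zero_less_abs_iff abs_ge_zero mult_eq_0_iff mult_less_cancel_right2 linorder_not_le
            int_one_le_iff_zero_less)
    qed
    have "(\<Sum>j<N. z ^ j) = 0" using z1 zN by (simp add: sum_gp_strict)
    then show ?thesis unfolding t using False by simp
  qed
qed

lemma parseval: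
  fixes co :: "'a \<Rightarrow> complex" and e :: "'a \<Rightarrow> nat" and \<rho> :: real
  assumes I: "finite I" and inj: "inj_on e I" and eN: "\<And>i. i \<in> I \<Longrightarrow> e i < N" and N: "N > 0"
  shows "(\<Sum>j<N. (cmod (\<Sum>i\<in>I. co i * (of_real \<rho> * cis (2 * pi / N) ^ j) ^ e i))\<^sup>2)
       = real N * (\<Sum>i\<in>I. (cmod (co i))\<^sup>2 * \<rho> ^ (2 * e i))"
proof -
  define w where "w = cis (2 * pi / N)"
  define A where "A i k = co i * cnj (co k) * of_real (\<rho> ^ (e i + e k))" for i k
  have u: "co i * (of_real \<rho> * w ^ j) ^ e i = of_real (\<rho> ^ e i) * co i * w ^ (j * e i)" for i j
    by (simp add: power_mult_distrib power_mult mult_ac)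
  have "complex_of_real (\<Sum>j<N. (cmod (\<Sum>i\<in>I. co i * (of_real \<rho> * w ^ j) ^ e i))\<^sup>2)
      = (\<Sum>j<N. (\<Sum>i\<in>I. co i * (of_real \<rho> * w ^ j) ^ e i) * cnj (\<Sum>k\<in>I. co k * (of_real \<rho> * w ^ j) ^ e k))"
    by (simp only: of_real_sum complex_norm_square)
  also have "\<dots> = (\<Sum>j<N. \<Sum>i\<in>I. \<Sum>k\<in>I. A i k * (w ^ (j * e i) * cnj (w ^ (j * e k))))"
    unfolding cnj_sum sum_product u A_def by (simp add: mult_ac power_add)
  also have "\<dots> = (\<Sum>i\<in>I. \<Sum>k\<in>I. A i k * (\<Sum>j<N. w ^ (j * e i) * cnj (w ^ (j * e k))))"
    by (simp add: sum_distrib_left sum.swap[of _ "{..<N}"])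
  also have "\<dots> = (\<Sum>i\<in>I. \<Sum>k\<in>I. A i k * (if i = k then of_nat N else 0))"
  proof (intro sum.cong refl)
    fix i k assume "i \<in> I" "k \<in> I"
    then have "(e i = e k) = (i = k)" using inj by (auto simp: inj_on_def)
    then show "A i k * (\<Sum>j<N. w ^ (j * e i) * cnj (w ^ (j * e k))) = A i k * (if i = k then of_nat N else 0)"
      unfolding w_def using root_orth[OF N eN[OF \<open>i \<in> I\<close>] eN[OF \<open>k \<in> I\<close>]] by simp
  qed
  also have "\<dots> = (\<Sum>i\<in>I. A i i * of_nat N)"
    by (simp add: I if_distrib sum.delta cong: if_cong)
  also have "\<dots> = complex_of_real (real N * (\<Sum>i\<in>I. (cmod (co i))\<^sup>2 * \<rho> ^ (2 * e i)))"
    unfolding of_real_mult of_real_sum sum_distrib_left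
  proof (intro sum.cong refl)
    fix i
    have "A i i = complex_of_real ((cmod (co i))\<^sup>2) * complex_of_real (\<rho> ^ (2 * e i))"
      unfolding A_def complex_norm_square mult_2 by simp
    then show "A i i * of_nat N = complex_of_real (real N) * (complex_of_real ((cmod (co i))\<^sup>2) * complex_of_real (\<rho> ^ (2 * e i)))"
      by (simp only: of_real_of_nat_eq mult_ac)
  qed
  finally show ?thesis unfolding w_def by (simp only: of_real_eq_iff)
qed

lemma exists_ge_avg:
  fixes X :: "nat \<Rightarrow> real"
  assumes "N > 0" "(\<Sum>j<N. X j) = real N * S"
  shows "\<exists>j<N. X j \<ge> S"
proof (rule ccontr)
  assume "\<not> (\<exists>j<N. X j \<ge> S)"
  then have "\<And>j. j \<in> {..<N} \<Longrightarrow> X j < S" by auto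
  then have "(\<Sum>j<N. X j) < (\<Sum>j<N. S)" using assms(1) by (intro sum_strict_mono) auto
  then show False using assms by simp
qed



lemma res_lower:
  assumes c: "c > 0" and R: "R > 0" and pM: "p \<le> M"
  shows "\<exists>l. cmod l = 1 / R \<and> (\<Sum>n\<le>M. (cmod (res c l x n))\<^sup>2) \<ge>
     (cmod (x p))\<^sup>2 * fact p / c ^ (2 * p) * R\<^sup>2 / R ^ (2 * p) * (\<Sum>n\<in>{p..M}. (c\<^sup>2 * R\<^sup>2) ^ n / fact n)"
proof -
  define N where "N = M + 2"
  have N: "N > 0" unfolding N_def by simp
  define w where "w = cis (2 * pi / N)"
  define L where "L j = 1 / (of_real R * w ^ j)" for j :: nat
  define C where "C n i = complex_of_real (c ^ (n - i) * sqrt (fact i / fact n))" for n i :: nat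
  define S where "S n = (\<Sum>i\<le>n. (cmod (x i * C n i))\<^sup>2 * R ^ (2 * (n - i + 1)))" for n
  have Lnz: "1 / L j = of_real R * w ^ j" for j unfolding L_def by simp
  have resL: "res c (L j) x n = (\<Sum>i\<le>n. (x i * C n i) * (of_real R * w ^ j) ^ (n - i + 1))" for j n
    unfolding res_closed C_def
    by (intro sum.cong refl) (simp add: Lnz[symmetric] power_one_over divide_inverse power_inverse)
  have par: "(\<Sum>j<N. (cmod (res c (L j) x n))\<^sup>2) = real N * S n" if "n \<le> M" for n
    unfolding resL S_def w_def
    by (rule parseval) (use that in \<open>auto simp: N_def inj_on_def\<close>)
  have "(\<Sum>j<N. \<Sum>n\<le>M. (cmod (res c (L j) x n))\<^sup>2) = (\<Sum>n\<le>M. \<Sum>j<N. (cmod (res c (L j) x n))\<^sup>2)"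
    by (rule sum.swap)
  also have "\<dots> = real N * (\<Sum>n\<le>M. S n)" by (simp add: par sum_distrib_left)
  finally obtain j where j: "(\<Sum>n\<le>M. (cmod (res c (L j) x n))\<^sup>2) \<ge> (\<Sum>n\<le>M. S n)"
    using exists_ge_avg[OF N] by blast
  have "(\<Sum>n\<le>M. S n) \<ge> (\<Sum>n\<in>{p..M}. S n)"
    by (rule sum_mono2) (use R in \<open>auto simp: S_def intro!: sum_nonneg\<close>)
  moreover have "S n \<ge> (cmod (x p))\<^sup>2 * fact p / c ^ (2 * p) * R\<^sup>2 / R ^ (2 * p) * ((c\<^sup>2 * R\<^sup>2) ^ n / fact n)"
    if n: "n \<in> {p..M}" for n
  proof -
    have pn: "p \<le> n" using n by simp
    have "S n \<ge> (cmod (x p * C n p))\<^sup>2 * R ^ (2 * (n - p + 1))"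
      unfolding S_def by (rule member_le_sum) (use pn R in auto)
    moreover have "(cmod (x p * C n p))\<^sup>2 * R ^ (2 * (n - p + 1))
       = (cmod (x p))\<^sup>2 * fact p / c ^ (2 * p) * R\<^sup>2 / R ^ (2 * p) * ((c\<^sup>2 * R\<^sup>2) ^ n / fact n)"
    proof -
      have cp: "c ^ (2 * (n - p)) = c ^ (2 * n) / c ^ (2 * p)"
      proof -
        have e: "2 * (n - p) = 2 * n - 2 * p" using pn by simp
        show ?thesis unfolding e using c pn by (intro power_diff) auto
      qed
      have Rp: "R ^ (2 * (n - p + 1)) = R\<^sup>2 * R ^ (2 * n) / R ^ (2 * p)"
      proof -
        have e: "2 * (n - p + 1) = 2 + (2 * n - 2 * p)" using pn by simp
        have "R ^ (2 * n - 2 * p) = R ^ (2 * n) / R ^ (2 * p)" using R pn by (intro power_diff) auto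
        then show ?thesis unfolding e power_add by simp
      qed
      have "(cmod (C n p))\<^sup>2 = c ^ (2 * (n - p)) * (fact p / fact n)"
      proof -
        have "cmod (C n p) = \<bar>c ^ (n - p) * sqrt (fact p / fact n)\<bar>" unfolding C_def by (rule norm_of_real)
        also have "\<dots> = c ^ (n - p) * sqrt (fact p / fact n)" using c by simp
        finally have "(cmod (C n p))\<^sup>2 = (c ^ (n - p))\<^sup>2 * (sqrt (fact p / fact n))\<^sup>2"
          by (simp add: power_mult_distrib)
        also have "\<dots> = c ^ (2 * (n - p)) * (fact p / fact n)"
          by (simp add: power_mult[symmetric] mult.commute)
        finally show ?thesis .
      qed
      then have "(cmod (x p * C n p))\<^sup>2 * R ^ (2 * (n - p + 1))
          = (cmod (x p))\<^sup>2 * (c ^ (2 * n) / c ^ (2 * p) * (fact p / fact n)) * (R\<^sup>2 * R ^ (2 * n) / R ^ (2 * p))"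
        unfolding cp Rp by (simp add: norm_mult power_mult_distrib)
      also have "\<dots> = (cmod (x p))\<^sup>2 * fact p / c ^ (2 * p) * R\<^sup>2 / R ^ (2 * p) * ((c\<^sup>2 * R\<^sup>2) ^ n / fact n)"
      proof -
        have p1: "c ^ (2 * n) = (c\<^sup>2) ^ n" "R ^ (2 * n) = (R\<^sup>2) ^ n" by (simp_all add: power_mult)
        show ?thesis unfolding p1 by (simp add: power_mult_distrib field_simps)
      qed
      finally show ?thesis .
    qed
    ultimately show ?thesis by simp
  qed
  then have "(\<Sum>n\<in>{p..M}. S n) \<ge> (\<Sum>n\<in>{p..M}. (cmod (x p))\<^sup>2 * fact p / c ^ (2 * p) * R\<^sup>2 / R ^ (2 * p) * ((c\<^sup>2 * R\<^sup>2) ^ n / fact n))"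
    by (intro sum_mono) auto
  ultimately have "(\<Sum>n\<le>M. (cmod (res c (L j) x n))\<^sup>2) \<ge>
      (cmod (x p))\<^sup>2 * fact p / c ^ (2 * p) * R\<^sup>2 / R ^ (2 * p) * (\<Sum>n\<in>{p..M}. (c\<^sup>2 * R\<^sup>2) ^ n / fact n)"
    using j by (simp add: sum_distrib_left)
  moreover have "cmod (L j) = 1 / R" unfolding L_def w_def using R by (simp add: norm_divide norm_mult norm_power)
  ultimately show ?thesis by blast
qed



lemma slice_l2:
  fixes x :: "nat \<times> nat \<Rightarrow> complex"
  assumes "x \<in> l2"
  shows "(\<lambda>m. x (k, m)) \<in> l2"
proof (rule l2I_bound(1))
  fix F :: "nat set" assume F: "finite F"
  have "(\<Sum>m\<in>F. (cmod (x (k, m)))\<^sup>2) = (\<Sum>z\<in>Pair k ` F. (cmod (x z))\<^sup>2)"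
    by (subst sum.reindex) (auto simp: inj_on_def)
  also have "\<dots> \<le> (l2norm x)\<^sup>2" by (rule finite_le_l2norm[OF assms]) (use F in auto)
  finally show "(\<Sum>m\<in>F. (cmod (x (k, m)))\<^sup>2) \<le> (l2norm x)\<^sup>2" .
qed

lemma slice_sum:
  fixes x :: "nat \<times> nat \<Rightarrow> complex"
  assumes x: "x \<in> l2" and K: "finite K"
  shows "(\<Sum>k\<in>K. (l2norm (\<lambda>m. x (k, m)))\<^sup>2) \<le> (l2norm x)\<^sup>2"
proof -
  define g where "g z = (cmod (x z))\<^sup>2" for z
  have s: "g summable_on UNIV" using x unfolding l2_def g_def by simp
  have sK: "g summable_on (K \<times> UNIV)" by (rule summable_on_subset_banach[OF s]) auto
  have "(\<Sum>k\<in>K. (l2norm (\<lambda>m. x (k, m)))\<^sup>2) = (\<Sum>k\<in>K. infsum (\<lambda>m. g (k, m)) UNIV)"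
    unfolding l2norm_sq g_def by simp
  also have "\<dots> = infsum (\<lambda>k. infsum (\<lambda>m. g (k, m)) UNIV) K" using K by simp
  also have "\<dots> = infsum g (K \<times> UNIV)" by (rule infsum_Sigma_banach) (use sK in simp)
  also have "\<dots> \<le> infsum g UNIV" by (rule infsum_mono_neutral) (use sK s in \<open>auto simp: g_def\<close>)
  also have "\<dots> = (l2norm x)\<^sup>2" unfolding l2norm_sq g_def by simp
  finally show ?thesis .
qed

lemma dsum_apply: "direct_sum B x (k, m) = B k (\<lambda>m. x (k, m)) m"
  unfolding direct_sum_def by simp

lemma dsum_bound:
  fixes B :: "nat \<Rightarrow> (nat \<Rightarrow> complex) \<Rightarrow> (nat \<Rightarrow> complex)"
  assumes Bl2: "\<And>k f. f \<in> l2 \<Longrightarrow> B k f \<in> l2"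
    and Bb: "\<And>k f. f \<in> l2 \<Longrightarrow> l2norm (B k f) \<le> C * l2norm f"
    and C: "C \<ge> 0" and x: "x \<in> l2"
  shows "direct_sum B x \<in> l2" "l2norm (direct_sum B x) \<le> C * l2norm x"
proof -
  have fin: "(\<Sum>z\<in>F. (cmod (direct_sum B x z))\<^sup>2) \<le> (C * l2norm x)\<^sup>2" if F: "finite F" for F
  proof -
    define K where "K = fst ` F"
    define M where "M = snd ` F"
    have KM: "finite K" "finite M" "F \<subseteq> K \<times> M" using F subset_fst_snd[of F] unfolding K_def M_def by auto
    have "(\<Sum>z\<in>F. (cmod (direct_sum B x z))\<^sup>2) \<le> (\<Sum>z\<in>K \<times> M. (cmod (direct_sum B x z))\<^sup>2)"
      by (rule sum_mono2) (use KM in auto)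
    also have "\<dots> = (\<Sum>k\<in>K. \<Sum>m\<in>M. (cmod (B k (\<lambda>m. x (k, m)) m))\<^sup>2)"
      unfolding sum.cartesian_product by (intro sum.cong refl) (auto simp: dsum_apply)
    also have "\<dots> \<le> (\<Sum>k\<in>K. (l2norm (B k (\<lambda>m. x (k, m))))\<^sup>2)"
      by (intro sum_mono finite_le_l2norm Bl2 slice_l2 x KM)
    also have "\<dots> \<le> (\<Sum>k\<in>K. C\<^sup>2 * (l2norm (\<lambda>m. x (k, m)))\<^sup>2)"
    proof (intro sum_mono)
      fix k
      have "l2norm (B k (\<lambda>m. x (k, m))) \<le> C * l2norm (\<lambda>m. x (k, m))" by (intro Bb slice_l2 x)
      then have "(l2norm (B k (\<lambda>m. x (k, m))))\<^sup>2 \<le> (C * l2norm (\<lambda>m. x (k, m)))\<^sup>2"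
        by (intro power_mono) (auto simp: l2norm_nonneg)
      then show "(l2norm (B k (\<lambda>m. x (k, m))))\<^sup>2 \<le> C\<^sup>2 * (l2norm (\<lambda>m. x (k, m)))\<^sup>2"
        by (simp add: power_mult_distrib)
    qed
    also have "\<dots> = C\<^sup>2 * (\<Sum>k\<in>K. (l2norm (\<lambda>m. x (k, m)))\<^sup>2)" by (simp add: sum_distrib_left)
    also have "\<dots> \<le> C\<^sup>2 * (l2norm x)\<^sup>2" by (intro mult_left_mono slice_sum x KM) auto
    finally show ?thesis by (simp add: power_mult_distrib)
  qed
  have C0: "0 \<le> C * l2norm x" using C l2norm_nonneg[of x] by simp
  show "direct_sum B x \<in> l2" by (rule l2norm_le_bound(1)[OF fin C0])
  show "l2norm (direct_sum B x) \<le> C * l2norm x" by (rule l2norm_le_bound(2)[OF fin C0])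
qed

lemma dsum_lin:
  assumes "\<And>k. bounded_op (B k)" "f \<in> l2" "g \<in> l2"
  shows "direct_sum B (\<lambda>i. c * f i + g i) = (\<lambda>i. c * direct_sum B f i + direct_sum B g i)"
proof
  fix z :: "nat \<times> nat"
  obtain k m where z: "z = (k, m)" by (cases z)
  have "B k (\<lambda>m. c * f (k, m) + g (k, m)) = (\<lambda>i. c * B k (\<lambda>m. f (k, m)) i + B k (\<lambda>m. g (k, m)) i)"
    by (rule bop_lin[OF assms(1) slice_l2[OF assms(2)] slice_l2[OF assms(3)]])
  then show "direct_sum B (\<lambda>i. c * f i + g i) z = c * direct_sum B f z + direct_sum B g z"
    unfolding z dsum_apply by simp
qed

lemma dsum_bop:
  assumes "\<And>k. bounded_op (B k)" "\<And>k f. f \<in> l2 \<Longrightarrow> l2norm (B k f) \<le> C * l2norm f" "C \<ge> 0"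
  shows "bounded_op (direct_sum B)"
  unfolding bounded_op_def
proof (intro conjI ballI allI exI[of _ C])
  fix f :: "nat \<times> nat \<Rightarrow> complex" assume f: "f \<in> l2"
  show "direct_sum B f \<in> l2" by (rule dsum_bound(1)[OF bop_l2[OF assms(1)] assms(2,3) f])
  show "l2norm (direct_sum B f) \<le> C * l2norm f" by (rule dsum_bound(2)[OF bop_l2[OF assms(1)] assms(2,3) f])
  fix g :: "nat \<times> nat \<Rightarrow> complex" and c :: complex assume g: "g \<in> l2"
  show "direct_sum B (\<lambda>i. c * f i + g i) = (\<lambda>i. c * direct_sum B f i + direct_sum B g i)"
    by (rule dsum_lin[OF assms(1) f g])
qed

definition acoef :: "nat \<Rightarrow> real" where "acoef k = (if k = 0 then 1 else 1/2)"

definition Aop :: "nat \<Rightarrow> (nat \<Rightarrow> complex) \<Rightarrow> (nat \<Rightarrow> complex)" where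
  "Aop k = wsh (acoef k)"

lemma acoef: "acoef k > 0" "acoef k \<le> 1"
  unfolding acoef_def by auto

lemma Aop_bop: "bounded_op (Aop k)"
  unfolding Aop_def using wsh_bop acoef by (simp add: less_imp_le)

lemma Aop_qn: "quasinilpotent (Aop k)"
  unfolding Aop_def using wsh_qn acoef by (simp add: less_imp_le)

lemma Aop_bound: "f \<in> l2 \<Longrightarrow> l2norm (Aop k f) \<le> 1 * l2norm f"
proof -
  assume f: "f \<in> l2"
  have "l2norm (Aop k f) \<le> acoef k * l2norm f" unfolding Aop_def using wsh_bound(2)[OF _ f] acoef by (simp add: less_imp_le)
  also have "\<dots> \<le> 1 * l2norm f" using acoef l2norm_nonneg[of f] by (intro mult_right_mono) auto
  finally show ?thesis .
qed

lemma DA_bop: "bounded_op (direct_sum Aop)"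
proof (rule dsum_bop[OF Aop_bop])
  show "\<And>k f. f \<in> l2 \<Longrightarrow> l2norm (Aop k f) \<le> 1 * l2norm f" by (rule Aop_bound)
qed simp



definition Rsum :: "complex \<Rightarrow> (nat \<times> nat \<Rightarrow> complex) \<Rightarrow> (nat \<times> nat \<Rightarrow> complex)" where
  "Rsum l = direct_sum (\<lambda>k. res (acoef k) l)"

lemma resbd_mono:
  assumes "0 \<le> c" "c \<le> 1" "q > 1"
  shows "resbd q c r \<le> resbd q 1 r"
proof -
  have "c\<^sup>2 \<le> 1" using assms by (simp add: power_le_one)
  then have "q * c\<^sup>2 * r\<^sup>2 \<le> q * 1 * r\<^sup>2" using assms by (intro mult_right_mono mult_left_mono) auto
  then have "exp (q * c\<^sup>2 * r\<^sup>2) \<le> exp (q * 1\<^sup>2 * r\<^sup>2)" by simp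
  then show ?thesis unfolding resbd_def using assms
    by (intro real_sqrt_le_mono mult_left_mono) auto
qed

lemma resbd_nonneg: "q > 1 \<Longrightarrow> resbd q c r \<ge> 0"
  unfolding resbd_def by simp

lemma res_unif:
  assumes "l \<noteq> 0" "f \<in> l2" "q > 1"
  shows "l2norm (res (acoef k) l f) \<le> resbd q 1 (1 / cmod l) * l2norm f"
proof -
  have "l2norm (res (acoef k) l f) \<le> resbd q (acoef k) (1 / cmod l) * l2norm f"
    using res_l2(2)[OF _ assms(1,2,3)] acoef by (simp add: less_imp_le)
  also have "\<dots> \<le> resbd q 1 (1 / cmod l) * l2norm f"
    using resbd_mono[of "acoef k" q] acoef assms(3) l2norm_nonneg[of f]
    by (intro mult_right_mono) (auto simp: less_imp_le)
  finally show ?thesis .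
qed

lemma Rsum_l2:
  assumes "l \<noteq> 0" "x \<in> l2" "q > 1"
  shows "Rsum l x \<in> l2" "l2norm (Rsum l x) \<le> resbd q 1 (1 / cmod l) * l2norm x"
proof -
  have a: "\<And>k f. f \<in> l2 \<Longrightarrow> res (acoef k) l f \<in> l2"
    using res_l2(1)[OF _ assms(1) _ assms(3)] acoef by (simp add: less_imp_le)
  have b: "\<And>k f. f \<in> l2 \<Longrightarrow> l2norm (res (acoef k) l f) \<le> resbd q 1 (1 / cmod l) * l2norm f"
    using res_unif[OF assms(1) _ assms(3)] by blast
  show "Rsum l x \<in> l2" unfolding Rsum_def by (rule dsum_bound(1)[OF a b resbd_nonneg[OF assms(3)] assms(2)])
  show "l2norm (Rsum l x) \<le> resbd q 1 (1 / cmod l) * l2norm x"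
    unfolding Rsum_def by (rule dsum_bound(2)[OF a b resbd_nonneg[OF assms(3)] assms(2)])
qed

lemma Rsum_bop:
  assumes "l \<noteq> 0"
  shows "bounded_op (Rsum l)"
  unfolding Rsum_def
proof (rule dsum_bop)
  show "bounded_op (res (acoef k) l)" for k using res_bop[OF _ assms] acoef by (simp add: less_imp_le)
  show "\<And>k f. f \<in> l2 \<Longrightarrow> l2norm (res (acoef k) l f) \<le> resbd 2 1 (1 / cmod l) * l2norm f"
    using res_unif[OF assms, of _ 2] by simp
  show "0 \<le> resbd 2 1 (1 / cmod l)" by (rule resbd_nonneg) simp
qed

lemma DA_eq_slices:
  assumes "\<And>k m. f (k, m) = g (k, m)"
  shows "f = g"
  using assms by (auto simp: fun_eq_iff)

lemma DA_inv:
  assumes l: "l \<noteq> 0"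
  shows "invertible_op (\<lambda>f i. l * f i - direct_sum Aop f i)"
  unfolding invertible_op_def
proof (intro conjI exI[of _ "Rsum l"] ballI)
  show "bounded_op (\<lambda>f i. l * f i - direct_sum Aop f i)" by (rule bop_minus[OF DA_bop])
  show "bounded_op (Rsum l)" by (rule Rsum_bop[OF l])
  fix f :: "nat \<times> nat \<Rightarrow> complex" assume f: "f \<in> l2"
  show "Rsum l (\<lambda>i. l * f i - direct_sum Aop f i) = f"
  proof (rule DA_eq_slices)
    fix k m
    have "(\<lambda>m. f (k, m)) = res (acoef k) l (\<lambda>m. l * f (k, m) - wsh (acoef k) (\<lambda>m. f (k, m)) m)"
      by (rule res_unique[OF l]) simp
    then show "Rsum l (\<lambda>i. l * f i - direct_sum Aop f i) (k, m) = f (k, m)"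
      unfolding Rsum_def dsum_apply Aop_def by (metis (no_types))
  qed
  show "(\<lambda>i. l * Rsum l f i - direct_sum Aop (Rsum l f) i) = f"
  proof (rule DA_eq_slices)
    fix k m
    show "l * Rsum l f (k, m) - direct_sum Aop (Rsum l f) (k, m) = f (k, m)"
      unfolding Rsum_def dsum_apply Aop_def using res_eq[OF l] by simp
  qed
qed

definition e00 :: "nat \<times> nat \<Rightarrow> complex" where "e00 z = (if z = (0, 0) then 1 else 0)"

lemma e00_l2: "e00 \<in> l2"
proof (rule l2I_bound(1)[where C=1])
  fix F :: "(nat \<times> nat) set" assume F: "finite F"
  have "(\<Sum>z\<in>F. (cmod (e00 z))\<^sup>2) = (\<Sum>z\<in>F. if z = (0, 0) then 1 else 0)"
    by (rule sum.cong) (auto simp: e00_def)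
  also have "\<dots> \<le> 1" using F by (simp add: sum.delta)
  finally show "(\<Sum>z\<in>F. (cmod (e00 z))\<^sup>2) \<le> 1" .
qed

lemma DA_not_inv0: "\<not> invertible_op (\<lambda>f i. 0 * f i - direct_sum Aop f i)"
proof
  assume "invertible_op (\<lambda>f i. 0 * f i - direct_sum Aop f i)"
  then obtain R where "\<forall>f\<in>l2. (\<lambda>i. 0 * R f i - direct_sum Aop (R f) i) = f" unfolding invertible_op_def by blast
  then have "(\<lambda>i. 0 * R e00 i - direct_sum Aop (R e00) i) = e00" using e00_l2 by blast
  then have "0 * R e00 (0, 0) - direct_sum Aop (R e00) (0, 0) = e00 (0, 0)" by metis
  then show False by (simp add: dsum_apply Aop_def wsh_def e00_def)
qed

lemma DA_qn: "quasinilpotent (direct_sum Aop)"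
  unfolding quasinilpotent_def op_spectrum_def
  using DA_bop DA_inv DA_not_inv0 by auto

lemma resolvent_DA:
  assumes l: "l \<noteq> 0" and x: "x \<in> l2"
  shows "resolvent (direct_sum Aop) l x = Rsum l x"
  unfolding resolvent_def
proof (rule the_equality)
  have "(\<lambda>i. l * Rsum l x i - direct_sum Aop (Rsum l x) i) = x"
  proof (rule DA_eq_slices)
    fix k m
    show "l * Rsum l x (k, m) - direct_sum Aop (Rsum l x) (k, m) = x (k, m)"
      unfolding Rsum_def dsum_apply Aop_def using res_eq[OF l] by simp
  qed
  then show "Rsum l x \<in> l2 \<and> (\<lambda>i. l * Rsum l x i - direct_sum Aop (Rsum l x) i) = x"
    using Rsum_l2(1)[OF l x, of 2] by simp
  fix y assume y: "y \<in> l2 \<and> (\<lambda>i. l * y i - direct_sum Aop y i) = x"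
  show "y = Rsum l x"
  proof (rule DA_eq_slices)
    fix k m
    have "\<And>n. l * y (k, n) - wsh (acoef k) (\<lambda>m. y (k, m)) n = x (k, n)"
      using y by (auto simp: fun_eq_iff dsum_apply Aop_def)
    then have "(\<lambda>m. y (k, m)) = res (acoef k) l (\<lambda>m. x (k, m))" by (rule res_unique[OF l])
    then show "y (k, m) = Rsum l x (k, m)" unfolding Rsum_def dsum_apply by metis
  qed
qed

lemma opnorm_resolvent_DA:
  assumes "l \<noteq> 0"
  shows "opnorm (resolvent (direct_sum Aop) l) = opnorm (Rsum l)"
  by (rule opnorm_cong) (use resolvent_DA[OF assms] in auto)



lemma res_e0_sq:
  assumes c: "c \<ge> 0" and l: "l \<noteq> 0"
  shows "(cmod (res c l e0 n))\<^sup>2 = (1 / cmod l)\<^sup>2 * ((c\<^sup>2 * (1 / cmod l)\<^sup>2) ^ n / fact n)"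
proof -
  have "res c l e0 n = (\<Sum>i\<le>n. if i = 0 then complex_of_real (c ^ n * sqrt (1 / fact n)) / l ^ (n + 1) else 0)"
    unfolding res_closed by (intro sum.cong refl) (auto simp: e0_def)
  also have "\<dots> = complex_of_real (c ^ n * sqrt (1 / fact n)) / l ^ (n + 1)" by (simp add: sum.delta)
  finally have e: "res c l e0 n = complex_of_real (c ^ n * sqrt (1 / fact n)) / l ^ (n + 1)" .
  have "cmod (res c l e0 n) = \<bar>c ^ n * sqrt (1 / fact n)\<bar> / cmod l ^ (n + 1)"
    unfolding e by (simp only: norm_divide norm_of_real norm_power)
  also have "\<dots> = c ^ n * sqrt (1 / fact n) * (1 / cmod l) ^ (n + 1)"
    using c by (simp add: power_one_over divide_inverse power_inverse)
  finally have "cmod (res c l e0 n) = c ^ n * sqrt (1 / fact n) * (1 / cmod l) ^ (n + 1)" .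
  moreover have sq: "(A * sqrt (1 / fact n) * B)\<^sup>2 = A\<^sup>2 * (1 / fact n) * B\<^sup>2" for A B :: real
    by (simp add: power_mult_distrib)
  ultimately have "(cmod (res c l e0 n))\<^sup>2 = (c ^ n)\<^sup>2 * (1 / fact n) * ((1 / cmod l) ^ (n + 1))\<^sup>2"
    by (simp only: sq)
  also have "\<dots> = (1 / cmod l)\<^sup>2 * ((c\<^sup>2 * (1 / cmod l)\<^sup>2) ^ n / fact n)"
  proof -
    have p: "\<And>z::real. (z ^ n)\<^sup>2 = (z\<^sup>2) ^ n" by (metis power_mult mult.commute)
    have "((1 / cmod l) ^ (n + 1))\<^sup>2 = ((1 / cmod l)\<^sup>2) ^ n * (1 / cmod l)\<^sup>2"
      unfolding power_add p by (simp only: power_mult_distrib p power_one_right)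
    then show ?thesis unfolding p by (simp add: power_mult_distrib)
  qed
  finally show ?thesis .
qed

lemma res_e0_norm:
  assumes c: "c \<ge> 0" and l: "l \<noteq> 0"
  shows "l2norm (res c l e0) = (1 / cmod l) * exp (c\<^sup>2 * (1 / cmod l)\<^sup>2 / 2)"
proof -
  define r where "r = 1 / cmod l"
  have r: "r > 0" unfolding r_def using l by simp
  have s: "(\<lambda>n. r\<^sup>2 * ((c\<^sup>2 * r\<^sup>2) ^ n / fact n)) sums (r\<^sup>2 * exp (c\<^sup>2 * r\<^sup>2))"
    using sums_mult[OF exp_converges[of "c\<^sup>2 * r\<^sup>2"], of "r\<^sup>2"] by (simp add: divide_inverse mult.commute)
  have "((\<lambda>n. (cmod (res c l e0 n))\<^sup>2) has_sum (r\<^sup>2 * exp (c\<^sup>2 * r\<^sup>2))) UNIV"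
    unfolding res_e0_sq[OF c l] r_def[symmetric] by (rule sums_nonneg_imp_has_sum[OF s]) simp
  then have "(\<Sum>\<^sub>\<infinity>n. (cmod (res c l e0 n))\<^sup>2) = r\<^sup>2 * exp (c\<^sup>2 * r\<^sup>2)" by (rule infsumI)
  then have "l2norm (res c l e0) = sqrt (r\<^sup>2 * exp (c\<^sup>2 * r\<^sup>2))" unfolding l2norm_def by simp
  also have "\<dots> = r * exp (c\<^sup>2 * r\<^sup>2 / 2)"
  proof -
    have "(r * exp (c\<^sup>2 * r\<^sup>2 / 2))\<^sup>2 = r\<^sup>2 * exp (c\<^sup>2 * r\<^sup>2)"
      by (simp add: power_mult_distrib power2_eq_square exp_add[symmetric])
    then show ?thesis using r by (metis abs_of_pos exp_gt_zero mult_pos_pos real_sqrt_abs)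
  qed
  finally show ?thesis unfolding r_def .
qed

lemma inv_norm_filterlim: "filterlim (\<lambda>l::complex. 1 / cmod l) at_top (at 0)"
proof -
  have "filterlim (\<lambda>l::complex. norm (inverse l)) at_top (at 0)"
    by (rule filterlim_at_infinity_imp_norm_at_top[OF filterlim_inverse_at_infinity])
  then show ?thesis by (simp add: norm_inverse divide_inverse)
qed

lemma ev_at0: "eventually P at_top \<Longrightarrow> eventually (\<lambda>l::complex. P (1 / cmod l)) (at 0)"
  using inv_norm_filterlim unfolding filterlim_iff by blast

lemma exp_tail:
  "\<exists>T::real. \<forall>t\<ge>T. \<exists>M\<ge>p. (\<Sum>n\<in>{p..M}. t ^ n / fact n) \<ge> exp t / 2"
proof -
  have "((\<lambda>t. real p * (1 + t) ^ p / exp t) \<longlongrightarrow> 0) at_top" by real_asymp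
  then have "eventually (\<lambda>t. real p * (1 + t) ^ p / exp t < 1/4) at_top"
    by (rule order_tendstoD) simp
  then obtain T where T: "\<And>t. t \<ge> T \<Longrightarrow> real p * (1 + t) ^ p / exp t < 1/4"
    by (auto simp: eventually_at_top_linorder)
  show ?thesis
  proof (intro exI[of _ "max T 0"] allI impI)
    fix t :: real assume t: "t \<ge> max T 0"
    have low: "(\<Sum>n<p. t ^ n / fact n) \<le> exp t / 4"
    proof -
      have "(\<Sum>n<p. t ^ n / fact n) \<le> (\<Sum>n<p. (1 + t) ^ p)"
      proof (rule sum_mono)
        fix n assume "n \<in> {..<p}"
        then have "n \<le> p" by simp
        have "t ^ n / fact n \<le> t ^ n" using t by (simp add: divide_le_eq fact_ge_1 mult_le_cancel_left1)
        also have "\<dots> \<le> (1 + t) ^ n" using t by (intro power_mono) auto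
        also have "\<dots> \<le> (1 + t) ^ p" using t \<open>n \<le> p\<close> by (intro power_increasing) auto
        finally show "t ^ n / fact n \<le> (1 + t) ^ p" .
      qed
      also have "\<dots> = real p * (1 + t) ^ p" by simp
      also have "\<dots> \<le> exp t / 4" using T[of t] t by (simp add: divide_less_eq)
      finally show ?thesis .
    qed
    have s: "(\<lambda>n. t ^ n / fact n) sums exp t" using exp_converges[of t] by (simp add: divide_inverse mult.commute)
    then have "(\<lambda>M. \<Sum>n<M. t ^ n / fact n) \<longlonglongrightarrow> exp t" by (simp add: sums_def)
    moreover have "3/4 * exp t < exp t" by simp
    ultimately have "eventually (\<lambda>M. 3/4 * exp t < (\<Sum>n<M. t ^ n / fact n)) sequentially"
      by (rule order_tendstoD)
    then obtain M0 where M0: "\<And>M. M \<ge> M0 \<Longrightarrow> 3/4 * exp t < (\<Sum>n<M. t ^ n / fact n)"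
      by (auto simp: eventually_sequentially)
    define M where "M = max M0 p"
    have "(\<Sum>n<Suc M. t ^ n / fact n) = (\<Sum>n<p. t ^ n / fact n) + (\<Sum>n\<in>{p..M}. t ^ n / fact n)"
    proof -
      have "{..<Suc M} = {..<p} \<union> {p..M}" unfolding M_def by auto
      then show ?thesis by (simp add: sum.union_disjoint ivl_disj_int)
    qed
    moreover have "3/4 * exp t < (\<Sum>n<Suc M. t ^ n / fact n)" using M0[of "Suc M"] unfolding M_def by simp
    ultimately have "(\<Sum>n\<in>{p..M}. t ^ n / fact n) \<ge> exp t / 2" using low by simp
    moreover have "M \<ge> p" unfolding M_def by simp
    ultimately show "\<exists>M\<ge>p. (\<Sum>n\<in>{p..M}. t ^ n / fact n) \<ge> exp t / 2" by blast
  qed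
qed



lemma ev_nonzero: "eventually (\<lambda>l::complex. l \<noteq> 0) (at 0)"
  by (simp add: eventually_at_filter)

lemma kx_eq:
  assumes "\<And>l. l \<noteq> 0 \<Longrightarrow> ln (l2norm (resolvent T l x)) / ln (opnorm (resolvent T l)) = f l"
  shows "kx T x = Limsup (at 0) (\<lambda>l. ereal (f l))"
  unfolding kx_def by (rule Limsup_eq) (use ev_nonzero in \<open>eventually_elim, use assms in auto\<close>)

lemma Limsup_ge1:
  fixes f :: "complex \<Rightarrow> real"
  assumes "\<And>y. y < 1 \<Longrightarrow> frequently (\<lambda>l. y < f l) F"
  shows "1 \<le> Limsup F (\<lambda>l. ereal (f l))"
proof (rule Limsup_greatest)
  fix P assume P: "eventually P F"
  have ex: "\<exists>l. P l \<and> y < f l" if "y < 1" for y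
    using frequently_ex[OF frequently_eventually_conj[OF assms[OF that] P]] by blast
  show "1 \<le> (SUP l\<in>Collect P. ereal (f l))"
  proof (rule ccontr)
    assume "\<not> 1 \<le> (SUP l\<in>Collect P. ereal (f l))"
    then have lt: "(SUP l\<in>Collect P. ereal (f l)) < 1" by simp
    obtain z where z: "(SUP l\<in>Collect P. ereal (f l)) < ereal z" "z < 1"
    proof (cases "(SUP l\<in>Collect P. ereal (f l))")
      case (real s) then show ?thesis using lt that[of "(s + 1) / 2"] by auto
    next
      case PInf then show ?thesis using lt by simp
    next
      case MInf then show ?thesis using that[of 0] by simp
    qed
    obtain l where l: "P l" "z < f l" using ex[OF z(2)] by blast
    have "ereal (f l) \<le> (SUP l\<in>Collect P. ereal (f l))" by (rule SUP_upper) (use l in simp)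
    then have "ereal (f l) < ereal z" using z(1) by (rule le_less_trans)
    then show False using l(2) by simp
  qed
qed

definition ek :: "nat \<Rightarrow> nat \<times> nat \<Rightarrow> complex" where "ek k z = (if z = (k, 0) then 1 else 0)"

lemma ek_l2: "ek k \<in> l2"
proof (rule l2I_bound(1)[where C=1])
  fix F :: "(nat \<times> nat) set" assume F: "finite F"
  have "(\<Sum>z\<in>F. (cmod (ek k z))\<^sup>2) = (\<Sum>z\<in>F. if z = (k, 0) then 1 else 0)"
    by (rule sum.cong) (auto simp: ek_def)
  also have "\<dots> \<le> 1" using F by (simp add: sum.delta)
  finally show "(\<Sum>z\<in>F. (cmod (ek k z))\<^sup>2) \<le> 1" .
qed

lemma ek_nz: "ek k \<noteq> (\<lambda>_. 0)"
  by (metis ek_def one_neq_zero)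

lemma res_zero: "l \<noteq> 0 \<Longrightarrow> res c l (\<lambda>_. 0) = (\<lambda>_. 0)"
  by (rule res_unique[symmetric]) (auto simp: wsh_def)

lemma Rsum_ek:
  assumes l: "l \<noteq> 0"
  shows "Rsum l (ek k) = (\<lambda>(j, m). if j = k then res (acoef k) l e0 m else 0)"
proof (rule DA_eq_slices)
  fix j m
  show "Rsum l (ek k) (j, m) = (\<lambda>(j, m). if j = k then res (acoef k) l e0 m else 0) (j, m)"
  proof (cases "j = k")
    case True
    have "(\<lambda>m. ek k (j, m)) = e0" using True by (auto simp: ek_def e0_def fun_eq_iff)
    then show ?thesis using True unfolding Rsum_def dsum_apply by simp
  next
    case False
    have "(\<lambda>m. ek k (j, m)) = (\<lambda>_. 0)" using False by (auto simp: ek_def fun_eq_iff)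
    then show ?thesis using False res_zero[OF l] unfolding Rsum_def dsum_apply by simp
  qed
qed

lemma l2norm_eqI:
  fixes f :: "'a \<Rightarrow> complex" and g :: "'b \<Rightarrow> complex"
  assumes f: "f \<in> l2" and g: "g \<in> l2"
    and fg: "\<And>F. finite F \<Longrightarrow> (\<Sum>i\<in>F. (cmod (f i))\<^sup>2) \<le> (l2norm g)\<^sup>2"
    and gf: "\<And>F. finite F \<Longrightarrow> (\<Sum>i\<in>F. (cmod (g i))\<^sup>2) \<le> (l2norm f)\<^sup>2"
  shows "l2norm f = l2norm g"
  using l2norm_le_bound(2)[OF fg l2norm_nonneg] l2norm_le_bound(2)[OF gf l2norm_nonneg] by simp

lemma Rsum_ek_norm:
  assumes l: "l \<noteq> 0"
  shows "l2norm (Rsum l (ek k)) = l2norm (res (acoef k) l e0)"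
proof -
  define g where "g = res (acoef k) l e0"
  have gl2: "g \<in> l2" unfolding g_def using res_l2(1)[OF _ l e0_l2, of _ 2] acoef by (simp add: less_imp_le)
  have R: "Rsum l (ek k) = (\<lambda>(j, m). if j = k then g m else 0)" unfolding g_def by (rule Rsum_ek[OF l])
  have Rl2: "Rsum l (ek k) \<in> l2" by (rule Rsum_l2(1)[OF l ek_l2, of 2]) simp
  show ?thesis unfolding g_def[symmetric]
  proof (rule l2norm_eqI[OF Rl2 gl2])
    fix F :: "(nat \<times> nat) set" assume F: "finite F"
    have "(\<Sum>z\<in>F. (cmod (Rsum l (ek k) z))\<^sup>2) = (\<Sum>z\<in>F \<inter> ({k} \<times> UNIV). (cmod (g (snd z)))\<^sup>2)"
      unfolding R by (rule sum.mono_neutral_cong_right) (use F in \<open>auto split: if_splits\<close>)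
    also have "\<dots> = (\<Sum>m\<in>snd ` (F \<inter> ({k} \<times> UNIV)). (cmod (g m))\<^sup>2)"
      by (rule sum.reindex[symmetric, unfolded comp_def]) (auto simp: inj_on_def)
    also have "\<dots> \<le> (l2norm g)\<^sup>2" by (rule finite_le_l2norm[OF gl2]) (use F in auto)
    finally show "(\<Sum>z\<in>F. (cmod (Rsum l (ek k) z))\<^sup>2) \<le> (l2norm g)\<^sup>2" .
  next
    fix F :: "nat set" assume F: "finite F"
    have "(\<Sum>m\<in>F. (cmod (g m))\<^sup>2) = (\<Sum>z\<in>Pair k ` F. (cmod (Rsum l (ek k) z))\<^sup>2)"
      unfolding R by (subst sum.reindex) (auto simp: inj_on_def)
    also have "\<dots> \<le> (l2norm (Rsum l (ek k)))\<^sup>2" by (rule finite_le_l2norm[OF Rl2]) (use F in auto)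
    finally show "(\<Sum>m\<in>F. (cmod (g m))\<^sup>2) \<le> (l2norm (Rsum l (ek k)))\<^sup>2" .
  qed
qed



lemma opnorm_res_ge:
  assumes "c \<ge> 0" "l \<noteq> 0"
  shows "opnorm (res c l) \<ge> (1 / cmod l) * exp (c\<^sup>2 * (1 / cmod l)\<^sup>2 / 2)"
  using opnorm_ge[OF res_bop[OF assms] e0_l2] e0_norm res_e0_norm[OF assms] by simp

lemma opnorm_res_le:
  assumes "c \<ge> 0" "l \<noteq> 0" "q > 1"
  shows "opnorm (res c l) \<le> resbd q c (1 / cmod l)"
  by (rule opnorm_le'[OF res_l2(2)[OF assms(1,2) _ assms(3)] resbd_nonneg[OF assms(3)]])

lemma resbd_special:
  assumes "c > 0" "R > 0"
  shows "resbd (1 + 1 / (c\<^sup>2 * R\<^sup>2)) c R = sqrt ((c\<^sup>2 * R\<^sup>2 + 1) * R\<^sup>2 * exp (c\<^sup>2 * R\<^sup>2 + 1))"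
proof -
  define t where "t = c\<^sup>2 * R\<^sup>2"
  have t: "t > 0" unfolding t_def using assms by (intro mult_pos_pos) auto
  have a: "(1 + 1 / t) / (1 + 1 / t - 1) = t + 1" using t by (simp add: field_simps)
  have b: "(1 + 1 / t) * c\<^sup>2 * R\<^sup>2 = t + 1" using t assms unfolding t_def by (simp add: field_simps)
  show ?thesis unfolding resbd_def t_def[symmetric] a b by (simp add: mult_ac)
qed

lemma res_nz:
  assumes "l \<noteq> 0" "x \<noteq> (\<lambda>_. 0)"
  shows "res c l x \<noteq> (\<lambda>_. 0)"
proof
  assume h: "res c l x = (\<lambda>_. 0)"
  have "x n = 0" for n using res_eq[OF assms(1), of c x n] unfolding h by (auto simp: wsh_def split: if_splits)
  then show False using assms(2) by auto
qed

lemma kx_wsh_le: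
  assumes c: "c > 0" and x: "x \<in> l2" "x \<noteq> (\<lambda>_. 0)"
  shows "kx (wsh c) x \<le> 1"
proof -
  define f where "f l = ln (l2norm (res c l x)) / ln (opnorm (res c l))" for l
  have "kx (wsh c) x = Limsup (at 0) (\<lambda>l. ereal (f l))"
  proof (rule kx_eq)
    fix l :: complex assume l: "l \<noteq> 0"
    show "ln (l2norm (resolvent (wsh c) l x)) / ln (opnorm (resolvent (wsh c) l)) = f l"
      unfolding f_def resolvent_wsh[OF l less_imp_le[OF c] x(1)] opnorm_resolvent_wsh[OF l less_imp_le[OF c]] ..
  qed
  also have "\<dots> \<le> 1"
    unfolding Limsup_le_iff
  proof (intro allI impI)
    fix y :: ereal assume y: "y > 1"
    obtain y' where y': "y' > 1" "ereal y' \<le> y"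
    proof (cases y)
      case (real z) then show ?thesis using y that[of z] by auto
    next
      case PInf then show ?thesis using that[of 2] by auto
    qed (use y in auto)
    define D where "D = max 0 (ln (l2norm x))"
    have D: "D \<ge> 0" unfolding D_def by simp
    have "((\<lambda>r. 1 + D / ln r) \<longlongrightarrow> 1) at_top" by real_asymp
    then have ev1: "eventually (\<lambda>r. 1 + D / ln r < y') at_top" using y'(1) by (rule order_tendstoD)
    have ev2: "eventually (\<lambda>r::real. r > 1) at_top" by (rule eventually_gt_at_top)
    have "eventually (\<lambda>l. (1 + D / ln (1 / cmod l) < y' \<and> 1 / cmod l > 1) \<and> l \<noteq> 0) (at 0)"
      by (intro eventually_conj ev_at0 ev1 ev2 ev_nonzero)
    then show "eventually (\<lambda>l. y > ereal (f l)) (at 0)"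
    proof eventually_elim
      case (elim l)
      define r where "r = 1 / cmod l"
      have l: "l \<noteq> 0" and r1: "r > 1" and ry: "1 + D / ln r < y'" using elim unfolding r_def by auto
      have Nl2: "res c l x \<in> l2" using res_l2(1)[OF less_imp_le[OF c] l x(1), where q=2] by simp
      have N: "l2norm (res c l x) > 0" by (rule l2norm_pos[OF Nl2 res_nz[OF l x(2)]])
      have "opnorm (res c l) \<ge> r * exp (c\<^sup>2 * r\<^sup>2 / 2)" unfolding r_def using opnorm_res_ge[OF _ l] c by simp
      moreover have "r * exp (c\<^sup>2 * r\<^sup>2 / 2) \<ge> r" using r1 by simp
      ultimately have O: "opnorm (res c l) \<ge> r" by linarith
      have lnO: "ln (opnorm (res c l)) \<ge> ln r" using O r1 by simp
      have lnr: "ln r > 0" using r1 by simp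
      have "l2norm (res c l x) \<le> opnorm (res c l) * l2norm x"
        by (rule opnorm_bound[OF res_bop[OF _ l] x(1)]) (use c in simp)
      have xpos: "l2norm x > 0" by (rule l2norm_pos[OF x])
      have "ln (l2norm (res c l x)) \<le> ln (opnorm (res c l) * l2norm x)"
        using N \<open>l2norm (res c l x) \<le> opnorm (res c l) * l2norm x\<close> by simp
      also have "\<dots> = ln (opnorm (res c l)) + ln (l2norm x)" using O r1 xpos by (simp add: ln_mult)
      also have "\<dots> \<le> ln (opnorm (res c l)) + D" unfolding D_def by simp
      finally have "f l \<le> (ln (opnorm (res c l)) + D) / ln (opnorm (res c l))"
        unfolding f_def using lnO lnr by (intro divide_right_mono) auto
      also have "\<dots> = 1 + D / ln (opnorm (res c l))" using lnO lnr by (simp add: field_simps)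
      also have "\<dots> \<le> 1 + D / ln r" using D lnO lnr by (intro add_left_mono divide_left_mono) auto
      finally have "f l < y'" using ry by simp
      then have "ereal (f l) < ereal y'" by simp
      then show ?case using y'(2) by (rule order_less_le_trans)
    qed
  qed
  finally show ?thesis .
qed

lemma kx_wsh_ge:
  assumes c: "c > 0" and x: "x \<in> l2" "x \<noteq> (\<lambda>_. 0)"
  shows "1 \<le> kx (wsh c) x"
proof -
  define f where "f l = ln (l2norm (res c l x)) / ln (opnorm (res c l))" for l
  have "kx (wsh c) x = Limsup (at 0) (\<lambda>l. ereal (f l))"
  proof (rule kx_eq)
    fix l :: complex assume l: "l \<noteq> 0"
    show "ln (l2norm (resolvent (wsh c) l x)) / ln (opnorm (resolvent (wsh c) l)) = f l"
      unfolding f_def resolvent_wsh[OF l less_imp_le[OF c] x(1)] opnorm_resolvent_wsh[OF l less_imp_le[OF c]] ..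
  qed
  moreover have "1 \<le> Limsup (at 0) (\<lambda>l. ereal (f l))"
  proof (rule Limsup_ge1)
    fix y :: real assume y: "y < 1"
    obtain p where p: "x p \<noteq> 0" using x(2) by auto
    define K where "K = (cmod (x p))\<^sup>2 * fact p / c ^ (2 * p)"
    have K: "K > 0" using p c by (simp add: K_def)
    obtain T :: real where T: "\<And>t::real. t \<ge> T \<Longrightarrow> \<exists>M\<ge>p. (\<Sum>n\<in>{p..M}. t ^ n / fact n) \<ge> exp t / 2"
      using exp_tail[of p] by blast
    define Lf where "Lf R = K * R\<^sup>2 / R ^ (2 * p) * exp (c\<^sup>2 * R\<^sup>2) / 2" for R :: real
    define Uf where "Uf R = (c\<^sup>2 * R\<^sup>2 + 1) * R\<^sup>2 * exp (c\<^sup>2 * R\<^sup>2 + 1)" for R :: real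
    have lim1: "((\<lambda>R. ln (Lf R) / ln (Uf R)) \<longlongrightarrow> 1) at_top" unfolding Lf_def Uf_def using K c by real_asymp
    have lim2: "filterlim Lf at_top at_top" unfolding Lf_def using K c by real_asymp
    have lim3: "filterlim (\<lambda>R. c\<^sup>2 * R\<^sup>2) at_top at_top" using c by real_asymp
    show "frequently (\<lambda>l. y < f l) (at 0)"
      unfolding frequently_at
    proof (intro allI impI)
      fix d :: real assume d: "d > 0"
      have e1: "eventually (\<lambda>R. y < ln (Lf R) / ln (Uf R)) at_top" by (rule order_tendstoD(1)[OF lim1 y])
      have e2: "eventually (\<lambda>R. 1 \<le> Lf R) at_top" using lim2 by (simp add: filterlim_at_top)
      have e3: "eventually (\<lambda>R. T \<le> c\<^sup>2 * R\<^sup>2) at_top" using lim3 by (simp add: filterlim_at_top)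
      have e4: "eventually (\<lambda>R. R > max 1 (1 / d)) at_top" by (rule eventually_gt_at_top)
      have "eventually (\<lambda>R. (y < ln (Lf R) / ln (Uf R) \<and> 1 \<le> Lf R) \<and> (T \<le> c\<^sup>2 * R\<^sup>2 \<and> R > max 1 (1 / d))) at_top"
        by (intro eventually_conj e1 e2 e3 e4)
      then obtain R where R: "y < ln (Lf R) / ln (Uf R)" "1 \<le> Lf R" "T \<le> c\<^sup>2 * R\<^sup>2" "R > max 1 (1 / d)"
        by (auto simp: eventually_at_top_linorder)
      have R1: "R > 1" and Rd: "R > 1 / d" using R(4) by auto
      have R0: "R > 0" using R1 by simp
      obtain M where M: "M \<ge> p" "(\<Sum>n\<in>{p..M}. (c\<^sup>2 * R\<^sup>2) ^ n / fact n) \<ge> exp (c\<^sup>2 * R\<^sup>2) / 2"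
        using T[OF R(3)] by blast
      obtain l where l: "cmod l = 1 / R" and
        lb: "(\<Sum>n\<le>M. (cmod (res c l x n))\<^sup>2) \<ge> K * R\<^sup>2 / R ^ (2 * p) * (\<Sum>n\<in>{p..M}. (c\<^sup>2 * R\<^sup>2) ^ n / fact n)"
        using res_lower[OF c R0 M(1), of x] unfolding K_def by auto
      have l0: "l \<noteq> 0" using l R0 by auto
      have rR: "1 / cmod l = R" using l R0 by simp
      have KR: "K * R\<^sup>2 / R ^ (2 * p) \<ge> 0" using K R0 by simp
      have "K * R\<^sup>2 / R ^ (2 * p) * (\<Sum>n\<in>{p..M}. (c\<^sup>2 * R\<^sup>2) ^ n / fact n) \<ge> K * R\<^sup>2 / R ^ (2 * p) * (exp (c\<^sup>2 * R\<^sup>2) / 2)"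
        by (rule mult_left_mono[OF M(2) KR])
      then have LN: "Lf R \<le> (\<Sum>n\<le>M. (cmod (res c l x n))\<^sup>2)" using lb unfolding Lf_def by simp
      have Nl2: "res c l x \<in> l2" using res_l2(1)[OF less_imp_le[OF c] l0 x(1), where q=2] by simp
      define N where "N = l2norm (res c l x)"
      have NN: "Lf R \<le> N\<^sup>2" using LN finite_le_l2norm[OF Nl2, of "{..M}"] unfolding N_def by simp
      have Npos: "N > 0" unfolding N_def by (rule l2norm_pos[OF Nl2 res_nz[OF l0 x(2)]])
      define Op where "Op = opnorm (res c l)"
      have O1: "Op \<ge> R * exp (c\<^sup>2 * R\<^sup>2 / 2)" unfolding Op_def using opnorm_res_ge[OF less_imp_le[OF c] l0] rR by simp
      have "R * exp (c\<^sup>2 * R\<^sup>2 / 2) \<ge> R" using R0 by simp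
      then have O2: "Op > 1" using O1 R1 by linarith
      have q1: "1 + 1 / (c\<^sup>2 * R\<^sup>2) > 1" using c R0 by simp
      have O3: "Op \<le> sqrt (Uf R)" unfolding Op_def Uf_def
        using opnorm_res_le[OF less_imp_le[OF c] l0 q1] resbd_special[OF c R0] rR by simp
      have Ufpos: "Uf R > 0" unfolding Uf_def using R0 by (intro mult_pos_pos) (auto intro: add_nonneg_pos)
      have lnO: "0 < ln Op" "ln Op \<le> ln (Uf R) / 2"
        using O2 O3 Ufpos by (auto simp: ln_sqrt[symmetric])
      have lnL: "0 \<le> ln (Lf R) / 2" using R(2) by simp
      have lnN: "ln (Lf R) / 2 \<le> ln N"
      proof -
        have "ln (Lf R) \<le> ln (N\<^sup>2)" by (subst ln_le_cancel_iff) (use NN R(2) in auto)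
        also have "\<dots> = 2 * ln N" using Npos by (simp add: ln_realpow)
        finally show ?thesis by simp
      qed
      have "ln (Lf R) / ln (Uf R) = (ln (Lf R) / 2) / (ln (Uf R) / 2)" by simp
      also have "\<dots> \<le> ln N / ln Op"
        by (rule frac_le) (use lnO lnL lnN in auto)
      finally have "y < f l" using R(1) unfolding f_def N_def[symmetric] Op_def[symmetric] by simp
      moreover have "dist l 0 < d"
      proof -
        have "1 < R * d" using Rd d by (simp add: divide_less_eq)
        then have "1 / R < d" using R0 by (simp add: divide_less_eq mult.commute)
        then show ?thesis using l by simp
      qed
      ultimately show "\<exists>l\<in>UNIV. l \<noteq> 0 \<and> dist l 0 < d \<and> y < f l" using l0 by blast
    qed
  qed
  ultimately show ?thesis by simp
qed

lemma kx_wsh: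
  assumes "c > 0" "x \<in> l2" "x \<noteq> (\<lambda>_. 0)"
  shows "kx (wsh c) x = 1"
  using kx_wsh_le[OF assms] kx_wsh_ge[OF assms] by simp



lemma ek_norm_le: "l2norm (ek k) \<le> 1"
proof (rule l2norm_le_bound(2)[where C=1])
  fix F :: "(nat \<times> nat) set" assume F: "finite F"
  have "(\<Sum>z\<in>F. (cmod (ek k z))\<^sup>2) = (\<Sum>z\<in>F. if z = (k, 0) then 1 else 0)"
    by (rule sum.cong) (auto simp: ek_def)
  also have "\<dots> \<le> 1" using F by (simp add: sum.delta)
  finally show "(\<Sum>z\<in>F. (cmod (ek k z))\<^sup>2) \<le> 1\<^sup>2" by simp
qed simp

lemma kx_DA:
  "kx (direct_sum Aop) (ek k) = ereal ((acoef k)\<^sup>2)"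
proof -
  define a where "a = acoef k"
  have a: "a > 0" unfolding a_def using acoef by simp
  define f where "f l = ln (l2norm (Rsum l (ek k))) / ln (opnorm (Rsum l))" for l
  have kxe: "kx (direct_sum Aop) (ek k) = Limsup (at 0) (\<lambda>l. ereal (f l))"
  proof (rule kx_eq)
    fix l :: complex assume l: "l \<noteq> 0"
    show "ln (l2norm (resolvent (direct_sum Aop) l (ek k))) / ln (opnorm (resolvent (direct_sum Aop) l)) = f l"
      unfolding f_def resolvent_DA[OF l ek_l2] opnorm_resolvent_DA[OF l] ..
  qed
  define lo where "lo r = ln (r\<^sup>2 * exp (a\<^sup>2 * r\<^sup>2)) / ln ((r\<^sup>2 + 1) * r\<^sup>2 * exp (r\<^sup>2 + 1))" for r :: real
  define up where "up r = ln (r\<^sup>2 * exp (a\<^sup>2 * r\<^sup>2)) / ln (r\<^sup>2 * exp (r\<^sup>2))" for r :: real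
  have llo: "(lo \<longlongrightarrow> a\<^sup>2) at_top" unfolding lo_def using a by real_asymp
  have lup: "(up \<longlongrightarrow> a\<^sup>2) at_top" unfolding up_def using a by real_asymp
  have bounds: "lo (1 / cmod l) \<le> f l \<and> f l \<le> up (1 / cmod l)" if l: "l \<noteq> 0" and r1: "1 / cmod l > 1" for l
  proof -
    define r where "r = 1 / cmod l"
    have r: "r > 1" using r1 unfolding r_def .
    have r0: "r > 0" using r by simp
    have num: "l2norm (Rsum l (ek k)) = r * exp (a\<^sup>2 * r\<^sup>2 / 2)"
      unfolding Rsum_ek_norm[OF l] r_def a_def using res_e0_norm[OF _ l] acoef by (simp add: less_imp_le)
    have lnnum: "ln (l2norm (Rsum l (ek k))) = ln (r\<^sup>2 * exp (a\<^sup>2 * r\<^sup>2)) / 2"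
      unfolding num using r0 by (simp add: ln_mult ln_realpow)
    have numpos: "ln (r\<^sup>2 * exp (a\<^sup>2 * r\<^sup>2)) > 0"
    proof -
      have "r\<^sup>2 > 1" using r by (simp add: one_less_power)
      moreover have "exp (a\<^sup>2 * r\<^sup>2) \<ge> 1" using a by simp
      moreover have "r\<^sup>2 * exp (a\<^sup>2 * r\<^sup>2) \<ge> r\<^sup>2 * 1" using \<open>exp (a\<^sup>2 * r\<^sup>2) \<ge> 1\<close> by (intro mult_left_mono) auto
      ultimately have "r\<^sup>2 * exp (a\<^sup>2 * r\<^sup>2) > 1" by simp
      then show ?thesis by simp
    qed
    have Olow: "opnorm (Rsum l) \<ge> r * exp (r\<^sup>2 / 2)"
    proof -
      have "l2norm (Rsum l (ek 0)) \<le> opnorm (Rsum l)" by (rule opnorm_ge[OF Rsum_bop[OF l] ek_l2 ek_norm_le])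
      moreover have "l2norm (Rsum l (ek 0)) = r * exp (r\<^sup>2 / 2)"
        unfolding Rsum_ek_norm[OF l] r_def using res_e0_norm[OF _ l, of 1] by (simp add: acoef_def)
      ultimately show ?thesis by simp
    qed
    have q1: "1 + 1 / (1\<^sup>2 * r\<^sup>2) > (1::real)" using r0 by simp
    have Oup: "opnorm (Rsum l) \<le> sqrt ((r\<^sup>2 + 1) * r\<^sup>2 * exp (r\<^sup>2 + 1))"
    proof -
      have "opnorm (Rsum l) \<le> resbd (1 + 1 / (1\<^sup>2 * r\<^sup>2)) 1 r"
        unfolding r_def by (rule opnorm_le'[OF Rsum_l2(2)[OF l _ q1[unfolded r_def]] resbd_nonneg[OF q1[unfolded r_def]]])
      then show ?thesis using resbd_special[of 1 r] r0 by simp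
    qed
    have "0 < r * exp (r\<^sup>2 / 2)" using r0 by simp
    then have Opos: "opnorm (Rsum l) > 0" using Olow by linarith
    have lnlow: "ln (opnorm (Rsum l)) \<ge> ln (r\<^sup>2 * exp (r\<^sup>2)) / 2"
    proof -
      have "ln (r\<^sup>2 * exp (r\<^sup>2)) / 2 = ln (r * exp (r\<^sup>2 / 2))" using r0 by (simp add: ln_mult ln_realpow)
      also have "\<dots> \<le> ln (opnorm (Rsum l))" using Olow r0 Opos by (subst ln_le_cancel_iff) auto
      finally show ?thesis .
    qed
    have lnlowpos: "ln (r\<^sup>2 * exp (r\<^sup>2)) > 0"
    proof -
      have "r\<^sup>2 > 1" using r by (simp add: one_less_power)
      moreover have "r\<^sup>2 * exp (r\<^sup>2) \<ge> r\<^sup>2 * 1" by (intro mult_left_mono) auto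
      ultimately have "r\<^sup>2 * exp (r\<^sup>2) > 1" by simp
      then show ?thesis by simp
    qed
    have "r\<^sup>2 + 1 > 0" by (simp add: add_nonneg_pos)
    then have Upos: "(r\<^sup>2 + 1) * r\<^sup>2 * exp (r\<^sup>2 + 1) > 0" using r0 by (intro mult_pos_pos) auto
    have lnup: "ln (opnorm (Rsum l)) \<le> ln ((r\<^sup>2 + 1) * r\<^sup>2 * exp (r\<^sup>2 + 1)) / 2"
    proof -
      have "ln (opnorm (Rsum l)) \<le> ln (sqrt ((r\<^sup>2 + 1) * r\<^sup>2 * exp (r\<^sup>2 + 1)))"
        using Oup Opos Upos by (subst ln_le_cancel_iff) auto
      then show ?thesis using Upos by (simp add: ln_sqrt)
    qed
    have "lo r = (ln (r\<^sup>2 * exp (a\<^sup>2 * r\<^sup>2)) / 2) / (ln ((r\<^sup>2 + 1) * r\<^sup>2 * exp (r\<^sup>2 + 1)) / 2)"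
      unfolding lo_def by simp
    also have "\<dots> \<le> f l" unfolding f_def lnnum
      by (rule frac_le) (use numpos lnlow lnlowpos lnup in auto)
    finally have 1: "lo r \<le> f l" .
    have "f l \<le> (ln (r\<^sup>2 * exp (a\<^sup>2 * r\<^sup>2)) / 2) / (ln (r\<^sup>2 * exp (r\<^sup>2)) / 2)" unfolding f_def lnnum
      by (rule frac_le) (use numpos lnlow lnlowpos in auto)
    also have "\<dots> = up r" unfolding up_def by simp
    finally have 2: "f l \<le> up r" .
    show ?thesis using 1 2 unfolding r_def by simp
  qed
  have ev: "eventually (\<lambda>l. lo (1 / cmod l) \<le> f l \<and> f l \<le> up (1 / cmod l)) (at 0)"
  proof -
    have "eventually (\<lambda>l. 1 / cmod l > 1 \<and> l \<noteq> 0) (at (0::complex))"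
      by (intro eventually_conj ev_at0 eventually_gt_at_top ev_nonzero)
    then show ?thesis by eventually_elim (use bounds in auto)
  qed
  have t1: "((\<lambda>l. lo (1 / cmod l)) \<longlongrightarrow> a\<^sup>2) (at 0)" by (rule filterlim_compose[OF llo inv_norm_filterlim])
  have t2: "((\<lambda>l. up (1 / cmod l)) \<longlongrightarrow> a\<^sup>2) (at 0)" by (rule filterlim_compose[OF lup inv_norm_filterlim])
  have "(f \<longlongrightarrow> a\<^sup>2) (at 0)"
    by (rule tendsto_sandwich[OF _ _ t1 t2]) (use ev in \<open>auto elim: eventually_mono\<close>)
  then have "((\<lambda>l. ereal (f l)) \<longlongrightarrow> ereal (a\<^sup>2)) (at 0)" by simp
  then have "Limsup (at 0) (\<lambda>l. ereal (f l)) = ereal (a\<^sup>2)" by (rule lim_imp_Limsup[rotated]) simp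
  then show ?thesis unfolding kxe a_def .
qed



theorem corollary3p8:
  "\<exists>A :: nat \<Rightarrow> ((nat \<Rightarrow> complex) \<Rightarrow> (nat \<Rightarrow> complex)).
     (\<forall>k. quasinilpotent (A k)) \<and>
     quasinilpotent (direct_sum A) \<and>
     ereal ` closure {r :: real. ereal r \<in> (\<Union>k. power_set (A k))}
       \<subset> power_set (direct_sum A)"
proof (intro exI[of _ Aop] conjI)
  show "\<forall>k. quasinilpotent (Aop k)" using Aop_qn by blast
  show "quasinilpotent (direct_sum Aop)" by (rule DA_qn)
  have ps: "power_set (Aop k) \<subseteq> {1}" for k
  proof
    fix v assume "v \<in> power_set (Aop k)"
    then obtain x where x: "x \<in> l2" "x \<noteq> (\<lambda>_. 0)" "v = kx (Aop k) x" unfolding power_set_def by blast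
    then show "v \<in> {1}" unfolding Aop_def using kx_wsh[OF _ x(1,2), of "acoef k"] acoef by simp
  qed
  have S: "{r :: real. ereal r \<in> (\<Union>k. power_set (Aop k))} \<subseteq> {1}"
  proof
    fix r :: real assume "r \<in> {r. ereal r \<in> (\<Union>k. power_set (Aop k))}"
    then obtain k where "ereal r \<in> power_set (Aop k)" by blast
    then have "ereal r = 1" using ps by blast
    then show "r \<in> {1}" by (simp add: one_ereal_def)
  qed
  have cl: "closure {r :: real. ereal r \<in> (\<Union>k. power_set (Aop k))} \<subseteq> {1}"
    by (rule closure_minimal[OF S closed_singleton])
  have one: "ereal 1 \<in> power_set (direct_sum Aop)"
  proof -
    have e: "kx (direct_sum Aop) (ek 0) = ereal 1" using kx_DA[of 0] by (simp add: acoef_def)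
    show ?thesis unfolding power_set_def
      by (intro CollectI exI[of _ "ek 0"] conjI ek_l2 ek_nz e[symmetric])
  qed
  have quarter: "ereal (1/4) \<in> power_set (direct_sum Aop)"
  proof -
    have e: "kx (direct_sum Aop) (ek 1) = ereal (1/4)" using kx_DA[of 1] by (simp add: acoef_def power2_eq_square)
    show ?thesis unfolding power_set_def
      by (intro CollectI exI[of _ "ek 1"] conjI ek_l2 ek_nz e[symmetric])
  qed
  have sub: "ereal ` closure {r :: real. ereal r \<in> (\<Union>k. power_set (Aop k))} \<subseteq> {ereal 1}"
    using cl by auto
  show "ereal ` closure {r :: real. ereal r \<in> (\<Union>k. power_set (Aop k))} \<subset> power_set (direct_sum Aop)"
  proof
    show "ereal ` closure {r :: real. ereal r \<in> (\<Union>k. power_set (Aop k))} \<subseteq> power_set (direct_sum Aop)"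
      using sub one by blast
    show "ereal ` closure {r :: real. ereal r \<in> (\<Union>k. power_set (Aop k))} \<noteq> power_set (direct_sum Aop)"
      using sub quarter by auto
  qed
qed

end
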